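(* Let $N\ge2$, $n\ge1$, $h>0$, $\tau\in\mathbb{Z}_+$, $\alpha,\beta>0$, and let $A=\begin{bmatrix}1&h\\0&1\end{bmatrix}\otimes I_n$, $B=\begin{bmatrix}h^2/2\\ h\end{bmatrix}\otimes I_n$, $K=[\alpha\ \ \beta]\otimes I_n$. Let $\mathcal{G}_c$ be a fixed undirected graph on $\{1,\dots,N\}$ with symmetric $0/1$ adjacency entries $o_{ij}a_{ij}$ ($o_{ii}a_{ii}=0$), with Laplacian $\mathcal{L}_c$ whose eigenvalues are $0=\lambda_1\le\lambda_2\le\dots\le\lambda_N$. Consider agents with states $x_{i,k}\in\mathbb{R}^{2n}$ evolving as $$x_{i,k+1}=Ax_{i,k}+Bu_{i,k}+w_{i,k},\qquad u_{i,k}=K\sum_{j=1}^N o_{ij}a_{ij}\big(\hat x_{j,k}-\hat x_{i,k}\big),$$ where $\hat x_{l,k}=A^k x_{l,0}$ for $0\le k\le\tau-1$ and $\hat x_{l,k}=A^{\,k-(\lfloor k/\tau\rfloor-1)\tau}x_{l,(\lfloor k/\tau\rfloor-1)\tau}$ for $k\ge\tau$, and $w_{i,k}=[(w^p_{i,k})^T,(w^v_{i,k})^T]^T$ is an arbitrary sequence with $\|w^p_{i,k}\|\le r_{w_p}(i)$, $\|w^v_{i,k}\|\le r_{w_v}(i)$. For $i=2,\dots,N$ set $\bar a_0(i)=\lambda_i^2\alpha^2h^4\tau^2(\tau^2-1)/12$, $\bar a_1(i)=\lambda_i\alpha h^2(\tau-2\tau^2)/2-\lambda_i\beta h\tau$,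 $\bar a_2(i)=1+\lambda_i\alpha h^2(4\tau^2-\tau)/2+\lambda_i\beta h\tau$, $\bar a_3(i)=-2$, $\bar a_4(i)=1$, and $\varphi_{1,i}=\bar a_4-|\bar a_0|$, $\varphi_{2,i}=|\bar a_0^2-\bar a_4^2|-|\bar a_0\bar a_3-\bar a_1\bar a_4|$, $\varphi_{3,i}=|(\bar a_0^2-\bar a_4^2)^2-(\bar a_0\bar a_3-\bar a_1\bar a_4)^2|-|-(\bar a_0\bar a_1-\bar a_3\bar a_4)(\bar a_0\bar a_3-\bar a_1\bar a_4)+\bar a_2(\bar a_0+\bar a_4)(\bar a_0-\bar a_4)^2|$ (all $\bar a_\cdot=\bar a_\cdot(i)$). If (i) $\mathcal{G}_c$ is connected and (ii) $\varphi_{1,i}>0,\varphi_{2,i}>0,\varphi_{3,i}>0$ for all $i\in\{2,\dots,N\}$, then for every initial condition and every admissible noise sequence, $\sup_{k\ge0}\|x_{i,k}-x_{j,k}\|<\infty$ for all $i,j$. Equivalently, writing $x_{i,k}=[(p_{i,k}-\Delta_i)^T,v_{i,k}^T]^T$ for any formation vector $(\Delta_1,\dots,\Delta_N)$, there exist finite $\delta_p,\delta_v$ with $\limsup_{k\to\infty}\|p_{i,k}-p_{j,k}-(\Delta_i-\Delta_j)\|\le\delta_p$ and $\limsup_{k\to\infty}\|v_{i,k}-v_{j,k}\|\le\delta_v$ for all $i,j$ (bounded formation stability). *)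

theory Defs
  imports "Jordan_Normal_Form.Char_Poly" "HOL-Analysis.Euclidean_Space"
begin

text \<open>Agents are indexed by 0..<N (paper: 1..N). The state of agent i at time k is
  the pair (position-part, velocity-part) in R^n x R^n, i.e. the paper's vector in R^{2n};
  the product norm is the Euclidean norm of the stacked vector.\<close>

definition Amap :: "real \<Rightarrow> 'a::euclidean_space \<times> 'a \<Rightarrow> 'a \<times> 'a" where
  "Amap h s = (fst s + h *\<^sub>R snd s, snd s)"

definition Bmap :: "real \<Rightarrow> 'a::euclidean_space \<Rightarrow> 'a \<times> 'a" where
  "Bmap h u = ((h^2/2) *\<^sub>R u, h *\<^sub>R u)"

definition Kmap :: "real \<Rightarrow> real \<Rightarrow> 'a::euclidean_space \<times> 'a \<Rightarrow> 'a" where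
  "Kmap \<alpha> \<beta> s = \<alpha> *\<^sub>R fst s + \<beta> *\<^sub>R snd s"

definition xhat :: "nat \<Rightarrow> real \<Rightarrow> (nat \<Rightarrow> nat \<Rightarrow> 'a::euclidean_space \<times> 'a) \<Rightarrow> nat \<Rightarrow> nat \<Rightarrow> 'a \<times> 'a" where
  "xhat \<tau> h x l k =
     (if k < \<tau> then (Amap h ^^ k) (x l 0)
      else (Amap h ^^ (k - (k div \<tau> - 1) * \<tau>)) (x l ((k div \<tau> - 1) * \<tau>)))"

definition ctrl :: "nat \<Rightarrow> (nat \<Rightarrow> nat \<Rightarrow> real) \<Rightarrow> real \<Rightarrow> real \<Rightarrow> nat \<Rightarrow> real
    \<Rightarrow> (nat \<Rightarrow> nat \<Rightarrow> 'a::euclidean_space \<times> 'a) \<Rightarrow> nat \<Rightarrow> nat \<Rightarrow> 'a" where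
  "ctrl N adj \<alpha> \<beta> \<tau> h x i k =
     Kmap \<alpha> \<beta> (\<Sum>j<N. adj i j *\<^sub>R (xhat \<tau> h x j k - xhat \<tau> h x i k))"

definition laplacian :: "nat \<Rightarrow> (nat \<Rightarrow> nat \<Rightarrow> real) \<Rightarrow> real mat" where
  "laplacian N adj = Matrix.mat N N (\<lambda>(i,j). if i = j then (\<Sum>l<N. adj i l) else - adj i j)"

definition graph_connected :: "nat \<Rightarrow> (nat \<Rightarrow> nat \<Rightarrow> real) \<Rightarrow> bool" where
  "graph_connected N adj \<longleftrightarrow>
     (\<forall>i<N. \<forall>j<N. (i, j) \<in> {(a, b). a < N \<and> b < N \<and> adj a b = 1}\<^sup>*)"

definition abar0 :: "real \<Rightarrow> real \<Rightarrow> real \<Rightarrow> real \<Rightarrow> real \<Rightarrow> real" where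
  "abar0 lm \<alpha> \<beta> h \<tau> = lm^2 * \<alpha>^2 * h^4 * \<tau>^2 * (\<tau>^2 - 1) / 12"
definition abar1 :: "real \<Rightarrow> real \<Rightarrow> real \<Rightarrow> real \<Rightarrow> real \<Rightarrow> real" where
  "abar1 lm \<alpha> \<beta> h \<tau> = lm * \<alpha> * h^2 * (\<tau> - 2 * \<tau>^2) / 2 - lm * \<beta> * h * \<tau>"
definition abar2 :: "real \<Rightarrow> real \<Rightarrow> real \<Rightarrow> real \<Rightarrow> real \<Rightarrow> real" where
  "abar2 lm \<alpha> \<beta> h \<tau> = 1 + lm * \<alpha> * h^2 * (4 * \<tau>^2 - \<tau>) / 2 + lm * \<beta> * h * \<tau>"
definition abar3 :: real where "abar3 = -2"
definition abar4 :: real where "abar4 = 1"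

definition phi1 :: "real \<Rightarrow> real \<Rightarrow> real \<Rightarrow> real \<Rightarrow> real \<Rightarrow> real" where
  "phi1 lm \<alpha> \<beta> h \<tau> = abar4 - \<bar>abar0 lm \<alpha> \<beta> h \<tau>\<bar>"
definition phi2 :: "real \<Rightarrow> real \<Rightarrow> real \<Rightarrow> real \<Rightarrow> real \<Rightarrow> real" where
  "phi2 lm \<alpha> \<beta> h \<tau> =
     (let a0 = abar0 lm \<alpha> \<beta> h \<tau>; a1 = abar1 lm \<alpha> \<beta> h \<tau>; a3 = abar3; a4 = abar4
      in \<bar>a0^2 - a4^2\<bar> - \<bar>a0 * a3 - a1 * a4\<bar>)"
definition phi3 :: "real \<Rightarrow> real \<Rightarrow> real \<Rightarrow> real \<Rightarrow> real \<Rightarrow> real" where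
  "phi3 lm \<alpha> \<beta> h \<tau> =
     (let a0 = abar0 lm \<alpha> \<beta> h \<tau>; a1 = abar1 lm \<alpha> \<beta> h \<tau>; a2 = abar2 lm \<alpha> \<beta> h \<tau>;
          a3 = abar3; a4 = abar4
      in \<bar>(a0^2 - a4^2)^2 - (a0 * a3 - a1 * a4)^2\<bar>
         - \<bar>- (a0 * a1 - a3 * a4) * (a0 * a3 - a1 * a4) + a2 * (a0 + a4) * (a0 - a4)^2\<bar>)"

end

theory Submission
  imports Defs "Jordan_Normal_Form.Schur_Decomposition"
begin

lemma cmod_sq_ident:
  fixes X Y :: complex and a b :: real
  shows "(cmod (of_real a*X + of_real b*Y))^2 - (cmod (of_real a*Y + of_real b*X))^2
       = (a^2-b^2)*((cmod X)^2 - (cmod Y)^2)"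
  unfolding cmod_power2 by (simp add: algebra_simps power2_eq_square)

lemma schur_step:
  fixes z P Ps Q Qs :: complex and a b :: real
  assumes ab: "\<bar>b\<bar> < \<bar>a\<bar>" and e1: "z * Q = of_real a * P - of_real b * Ps"
    and e2: "Qs = of_real a * Ps - of_real b * P" and z: "cmod z \<ge> 1"
    and Q: "Q \<noteq> 0" and QQ: "cmod Qs \<le> cmod Q"
  shows "P \<noteq> 0 \<and> cmod Ps \<le> cmod P"
proof -
  have "\<bar>b\<bar>^2 < \<bar>a\<bar>^2" by (rule power_strict_mono[OF ab]) simp_all
  hence d: "a^2 - b^2 > 0" by simp
  have f1: "of_real (a^2-b^2) * P = of_real a * (z*Q) + of_real b * Qs"
    unfolding e1 e2 by (simp add: algebra_simps power2_eq_square)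
  have f2: "of_real (a^2-b^2) * Ps = of_real a * Qs + of_real b * (z*Q)"
    unfolding e1 e2 by (simp add: algebra_simps power2_eq_square)
  have zQ: "cmod (z*Q) \<ge> cmod Q" using z by (simp add: norm_mult mult_le_cancel_right1)
  have zQ2: "(cmod (z*Q))^2 \<ge> (cmod Qs)^2" using zQ QQ by (meson norm_ge_zero order_trans power_mono)
  have "(cmod (of_real a * (z*Q) + of_real b * Qs))^2 - (cmod (of_real a * Qs + of_real b * (z*Q)))^2 \<ge> 0"
    unfolding cmod_sq_ident using d zQ2 by simp
  hence "(cmod (of_real (a^2-b^2) * Ps))^2 \<le> (cmod (of_real (a^2-b^2) * P))^2"
    unfolding f1 f2 by simp
  hence "(a^2-b^2)^2 * (cmod Ps)^2 \<le> (a^2-b^2)^2 * (cmod P)^2"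
    by (simp only: norm_mult norm_of_real power_mult_distrib power2_abs)
  hence "(cmod Ps)^2 \<le> (cmod P)^2" using d by simp
  hence g: "cmod Ps \<le> cmod P" by (simp add: power2_le_iff_abs_le)
  have "P \<noteq> 0"
  proof
    assume P0: "P = 0"
    hence "of_real a * (z*Q) = - (of_real b * Qs)" using f1 by (simp add: add_eq_0_iff)
    hence "\<bar>a\<bar> * cmod (z*Q) = \<bar>b\<bar> * cmod Qs" by (metis norm_minus_cancel norm_mult norm_of_real)
    moreover have "\<bar>b\<bar> * cmod Qs \<le> \<bar>b\<bar> * cmod (z*Q)" using QQ zQ by (simp add: mult_left_mono)
    moreover have "cmod (z*Q) > 0" using Q z by auto
    ultimately have "\<bar>a\<bar> * cmod (z*Q) \<le> \<bar>b\<bar> * cmod (z*Q)" by simp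
    hence "\<bar>a\<bar> \<le> \<bar>b\<bar>" using \<open>cmod (z*Q) > 0\<close> by simp
    thus False using ab by simp
  qed
  with g show ?thesis by simp
qed

lemma schur_base:
  fixes z :: complex and u v :: real
  assumes uv: "\<bar>v\<bar> < \<bar>u\<bar>" and z: "cmod z \<ge> 1"
  shows "of_real u * z + of_real v \<noteq> 0 \<and> cmod (of_real v * z + of_real u) \<le> cmod (of_real u * z + of_real v)"
proof -
  have "\<bar>v\<bar>^2 < \<bar>u\<bar>^2" by (rule power_strict_mono[OF uv]) simp_all
  hence d: "u^2 - v^2 > 0" by simp
  have "(cmod z)^2 \<ge> (cmod (1::complex))^2" using z by simp
  hence "(cmod (of_real u * z + of_real v * 1))^2 - (cmod (of_real u * 1 + of_real v * z))^2 \<ge> 0"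
    unfolding cmod_sq_ident using d by simp
  hence "(cmod (of_real v * z + of_real u))^2 \<le> (cmod (of_real u * z + of_real v))^2"
    by (simp add: algebra_simps)
  hence g: "cmod (of_real v * z + of_real u) \<le> cmod (of_real u * z + of_real v)"
    by (simp add: power2_le_iff_abs_le)
  have "cmod (of_real u * z) \<ge> \<bar>u\<bar>" using z by (simp add: norm_mult mult_le_cancel_left1)
  hence "of_real u * z + of_real v \<noteq> 0" using uv
    by (metis add_eq_0_iff norm_minus_cancel norm_of_real order.strict_trans2 order_less_irrefl)
  with g show ?thesis by simp
qed

lemma quartic_no_root:
  fixes a0 a1 a2 :: real and z :: complex
  assumes h0: "\<bar>a0\<bar> < 1"
    and h1: "\<bar>a1 + 2*a0\<bar> < \<bar>1 - a0^2\<bar>"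
    and h2: "\<bar>(1-a0^2)*(a2*(1-a0)) - (a1+2*a0)*(-2 - a0*a1)\<bar> < \<bar>(1-a0^2)^2 - (a1+2*a0)^2\<bar>"
    and p1: "a0 + a1 + a2 - 1 > 0" and pm1: "3 + a2 - a1 + a0 > 0"
    and z: "cmod z \<ge> 1"
  shows "z^4 - 2*z^3 + of_real a2 * z^2 + of_real a1 * z + of_real a0 \<noteq> 0"
proof -
  define B3 where "B3 = 1 - a0^2"
  define B2 where "B2 = -2 - a0*a1"
  define B1 where "B1 = a2*(1-a0)"
  define B0 where "B0 = a1 + 2*a0"
  define C2 where "C2 = B3^2 - B0^2"
  define C1 where "C1 = B3*B2 - B0*B1"
  define C0 where "C0 = B3*B1 - B0*B2"
  have hB: "\<bar>B0\<bar> < \<bar>B3\<bar>" using h1 unfolding B0_def B3_def .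
  have hC: "\<bar>C0\<bar> < \<bar>C2\<bar>" using h2 unfolding C0_def C2_def B0_def B1_def B2_def B3_def .
  have "\<bar>B0\<bar>^2 < \<bar>B3\<bar>^2" by (rule power_strict_mono[OF hB]) simp_all
  hence C2pos: "C2 > 0" unfolding C2_def by simp
  have ident: "(C2+C0)^2 - C1^2 = C2*(1-a0)^2*(a0 + a1 + a2 - 1)*(3 + a2 - a1 + a0)"
    unfolding C2_def C1_def C0_def B0_def B1_def B2_def B3_def by (simp add: algebra_simps power2_eq_square)
  have "(1-a0)^2 > 0" using h0 by simp
  hence "(C2+C0)^2 - C1^2 > 0" unfolding ident using C2pos p1 pm1 by simp
  hence lin: "\<bar>C1\<bar> < \<bar>C2+C0\<bar>" using abs_le_square_iff[of "C2+C0" C1] by linarith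
  have "\<bar>C2*C1 - C0*C1\<bar> < \<bar>C2^2 - C0^2\<bar>"
  proof -
    have "C2 - C0 \<noteq> 0" using hC by auto
    hence "\<bar>C2 - C0\<bar> * \<bar>C1\<bar> < \<bar>C2 - C0\<bar> * \<bar>C2 + C0\<bar>" using lin by simp
    moreover have "C2*C1 - C0*C1 = (C2-C0)*C1" by (simp add: algebra_simps)
    moreover have "C2^2 - C0^2 = (C2-C0)*(C2+C0)" by (simp add: algebra_simps power2_eq_square)
    ultimately show ?thesis by (simp only: abs_mult)
  qed
  from schur_base[OF this z]
  have L3: "of_real (C2^2 - C0^2) * z + of_real (C2*C1 - C0*C1) \<noteq> 0 \<and>
     cmod (of_real (C2*C1 - C0*C1) * z + of_real (C2^2 - C0^2)) \<le> cmod (of_real (C2^2 - C0^2) * z + of_real (C2*C1 - C0*C1))" .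
  have L2: "of_real C2 * z^2 + of_real C1 * z + of_real C0 \<noteq> 0 \<and>
     cmod (of_real C0 * z^2 + of_real C1 * z + of_real C2) \<le> cmod (of_real C2 * z^2 + of_real C1 * z + of_real C0)"
    by (rule schur_step[OF hC _ _ z conjunct1[OF L3] conjunct2[OF L3]])
       (simp_all add: algebra_simps power2_eq_square)
  have L1: "of_real B3 * z^3 + of_real B2 * z^2 + of_real B1 * z + of_real B0 \<noteq> 0 \<and>
     cmod (of_real B0 * z^3 + of_real B1 * z^2 + of_real B2 * z + of_real B3) \<le> cmod (of_real B3 * z^3 + of_real B2 * z^2 + of_real B1 * z + of_real B0)"
    by (rule schur_step[OF hB _ _ z conjunct1[OF L2] conjunct2[OF L2]])
       (simp_all add: C2_def C1_def C0_def algebra_simps power2_eq_square power3_eq_cube)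
  have "\<bar>a0\<bar> < \<bar>1\<bar>" using h0 by simp
  have L0: "z^4 - 2*z^3 + of_real a2 * z^2 + of_real a1 * z + of_real a0 \<noteq> 0 \<and>
     cmod (of_real a0 * z^4 + of_real a1 * z^3 + of_real a2 * z^2 - 2 * z + 1) \<le> cmod (z^4 - 2*z^3 + of_real a2 * z^2 + of_real a1 * z + of_real a0)"
    by (rule schur_step[OF \<open>\<bar>a0\<bar> < \<bar>1\<bar>\<close> _ _ z conjunct1[OF L1] conjunct2[OF L1]])
       (simp_all add: B3_def B2_def B1_def B0_def algebra_simps power2_eq_square power3_eq_cube power4_eq_xxxx)
  thus ?thesis by simp
qed

definition ap :: "complex poly \<Rightarrow> (nat \<Rightarrow> complex) \<Rightarrow> nat \<Rightarrow> complex" where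
  "ap q u n = (\<Sum>i\<le>degree q. coeff q i * u (n+i))"

lemma ap_bound: assumes "degree q \<le> K" shows "ap q u n = (\<Sum>i\<le>K. coeff q i * u (n+i))"
  unfolding ap_def
  by (rule sum.mono_neutral_left) (use assms in \<open>auto simp: coeff_eq_0\<close>)

lemma ap_lin: "ap ([:-r,1:] * q) u n = ap q u (Suc n) - r * ap q u n"
proof -
  let ?d = "degree q"
  have eq: "[:-r,1:] * q = Polynomial.smult (-r) q + pCons 0 q" by simp
  have deg: "degree ([:-r,1:] * q) \<le> Suc ?d"
    by (metis degree_mult_le degree_pCons_eq_if degree_0 add.commute add_Suc_right le_SucI order_trans
        plus_1_eq_Suc add_0 le_refl one_neq_zero pCons_eq_0_iff degree_pCons_0 nat.simps(3))
  have "ap ([:-r,1:] * q) u n = (\<Sum>i\<le>Suc ?d. coeff ([:-r,1:] * q) i * u (n+i))"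
    by (rule ap_bound[OF deg])
  also have "\<dots> = (\<Sum>i\<le>Suc ?d. (-r) * (coeff q i * u (n+i))) + (\<Sum>i\<le>Suc ?d. coeff (pCons 0 q) i * u (n+i))"
    unfolding eq by (simp add: sum_subtractf sum_negf algebra_simps)
  also have "(\<Sum>i\<le>Suc ?d. (-r) * (coeff q i * u (n+i))) = - r * ap q u n"
    by (simp only: sum_distrib_left[symmetric] ap_bound[of q "Suc ?d" u n, OF le_SucI[OF order_refl]])
  also have "(\<Sum>i\<le>Suc ?d. coeff (pCons 0 q) i * u (n+i)) = ap q u (Suc n)"
    by (subst sum.atMost_Suc_shift) (simp add: ap_def)
  finally show ?thesis by simp
qed

lemma first_order_bounded:
  fixes v :: "nat \<Rightarrow> complex"
  assumes r: "cmod r < 1" and E: "\<forall>n. cmod (v (Suc n) - r * v n) \<le> E"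
  shows "\<exists>B. \<forall>n. cmod (v n) \<le> B"
proof -
  define B where "B = max (cmod (v 0)) (E / (1 - cmod r))"
  have "cmod (v n) \<le> B" for n
  proof (induction n)
    case 0 thus ?case by (simp add: B_def)
  next
    case (Suc n)
    have "v (Suc n) = r * v n + (v (Suc n) - r * v n)" by simp
    hence "cmod (v (Suc n)) \<le> cmod r * cmod (v n) + E"
      by (metis E add_mono norm_mult norm_triangle_ineq order_trans order_refl)
    also have "\<dots> \<le> cmod r * B + E" using Suc by (simp add: mult_left_mono)
    also have "\<dots> \<le> B"
    proof -
      have "E / (1 - cmod r) \<le> B" by (simp add: B_def)
      hence "E \<le> B * (1 - cmod r)" using r by (simp add: pos_divide_le_eq)
      thus ?thesis by (simp add: algebra_simps)
    qed
    finally show ?case .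
  qed
  thus ?thesis by blast
qed

lemma prod_bounded:
  fixes u :: "nat \<Rightarrow> complex"
  assumes "\<forall>r\<in>set rs. cmod r < 1" and "\<exists>E. \<forall>n. cmod (ap (\<Prod>r\<leftarrow>rs. [:-r,1:]) u n) \<le> E"
  shows "\<exists>B. \<forall>n. cmod (u n) \<le> B"
  using assms
proof (induction rs)
  case Nil
  have "ap 1 u n = u n" for n by (simp add: ap_def)
  with Nil show ?case by simp
next
  case (Cons r rs)
  let ?v = "ap (\<Prod>r\<leftarrow>rs. [:-r,1:]) u"
  from Cons.prems obtain E where E: "\<forall>n. cmod (ap (\<Prod>r\<leftarrow>r#rs. [:-r,1:]) u n) \<le> E" by blast
  have "\<forall>n. cmod (?v (Suc n) - r * ?v n) \<le> E"
    using E by (simp only: list.map prod_list.Cons ap_lin) simp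
  from first_order_bounded[OF _ this] Cons.prems have "\<exists>B. \<forall>n. cmod (?v n) \<le> B" by simp
  with Cons.IH Cons.prems show ?case by simp
qed

lemma quartic_rec_bounded:
  fixes s g :: "nat \<Rightarrow> real" and a0 a1 a2 G :: real
  assumes roots: "\<forall>z::complex. cmod z \<ge> 1 \<longrightarrow> z^4 - 2*z^3 + of_real a2 * z^2 + of_real a1 * z + of_real a0 \<noteq> 0"
    and rec: "\<forall>n. s(n+4) - 2*s(n+3) + a2*s(n+2) + a1*s(n+1) + a0*s n = g n"
    and gb: "\<forall>n. \<bar>g n\<bar> \<le> G"
  shows "\<exists>B. \<forall>n. \<bar>s n\<bar> \<le> B"
proof -
  define pc where "pc = [:complex_of_real a0, of_real a1, of_real a2, -2, 1:]"
  have dpc: "degree pc = 4" and lpc: "lead_coeff pc = 1" by (simp_all add: pc_def)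
  from fundamental_theorem_algebra_factorized[of pc] obtain as where
    fa: "Polynomial.smult (lead_coeff pc) (\<Prod>a\<leftarrow>as. [:- a, 1:]) = pc" by blast
  hence pc: "pc = (\<Prod>a\<leftarrow>as. [:- a, 1:])" using lpc by simp
  have "\<forall>r\<in>set as. cmod r < 1"
  proof
    fix r assume "r \<in> set as"
    hence "poly pc r = 0" unfolding pc by (induction as) auto
    hence "r^4 - 2*r^3 + of_real a2 * r^2 + of_real a1 * r + of_real a0 = 0"
      by (simp add: pc_def algebra_simps power2_eq_square power3_eq_cube power4_eq_xxxx)
    with roots show "cmod r < 1" by (meson not_less)
  qed
  moreover
  define u where "u = (\<lambda>n. complex_of_real (s n))"
  have "ap pc u n = of_real (g n)" for n
  proof -
    have "ap pc u n = (\<Sum>i\<le>4. coeff pc i * u (n+i))" by (simp add: ap_def dpc)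
    also have "\<dots> = of_real (s(n+4) - 2*s(n+3) + a2*s(n+2) + a1*s(n+1) + a0*s n)"
      by (simp add: pc_def u_def numeral_eq_Suc algebra_simps)
    also have "\<dots> = of_real (g n)" by (simp only: rec[rule_format])
    finally show ?thesis .
  qed
  hence "\<forall>n. cmod (ap pc u n) \<le> G" using gb by simp
  ultimately obtain B where "\<forall>n. cmod (u n) \<le> B" using prod_bounded[of as u] unfolding pc by blast
  thus ?thesis unfolding u_def by auto
qed

lemma elim4:
  fixes p v f g :: "nat \<Rightarrow> real"
  assumes ep: "\<forall>m. p(m+2) = p(m+1) + c * v(m+1) + q11 * p m + q12 * v m + f m"
    and ev: "\<forall>m. v(m+2) = v(m+1) + q21 * p m + q22 * v m + g m"
  shows "p(m+4) - 2*p(m+3) + (1-q11-q22)*p(m+2) + (q11+q22-c*q21)*p(m+1) + (q11*q22-q12*q21)*p m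
          = f(m+2) - f(m+1) - q22*f m + c*g(m+1) + q12*g m"
    and "v(m+4) - 2*v(m+3) + (1-q11-q22)*v(m+2) + (q11+q22-c*q21)*v(m+1) + (q11*q22-q12*q21)*v m
          = q21*f m + g(m+2) - g(m+1) - q11*g m"
proof -
  define Ep where "Ep m = p(m+2) - p(m+1) - c * v(m+1) - q11 * p m - q12 * v m - f m" for m
  define Ev where "Ev m = v(m+2) - v(m+1) - q21 * p m - q22 * v m - g m" for m
  have Ep0: "Ep m = 0" for m using ep unfolding Ep_def by simp
  have Ev0: "Ev m = 0" for m using ev unfolding Ev_def by simp
  have n3: "m + 1 + 2 = m + 3" "m + 2 + 2 = m + 4" "m+1+1 = m+2" "m+2+1 = m+3" by simp_all
  have "p(m+4) - 2*p(m+3) + (1-q11-q22)*p(m+2) + (q11+q22-c*q21)*p(m+1) + (q11*q22-q12*q21)*p m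
          - (f(m+2) - f(m+1) - q22*f m + c*g(m+1) + q12*g m)
        = Ep(m+2) - Ep(m+1) - q22 * Ep m + c * Ev(m+1) + q12 * Ev m"
    unfolding Ep_def Ev_def n3 by (simp add: algebra_simps)
  thus "p(m+4) - 2*p(m+3) + (1-q11-q22)*p(m+2) + (q11+q22-c*q21)*p(m+1) + (q11*q22-q12*q21)*p m
          = f(m+2) - f(m+1) - q22*f m + c*g(m+1) + q12*g m" by (simp add: Ep0 Ev0)
  have "v(m+4) - 2*v(m+3) + (1-q11-q22)*v(m+2) + (q11+q22-c*q21)*v(m+1) + (q11*q22-q12*q21)*v m
          - (q21*f m + g(m+2) - g(m+1) - q11*g m)
        = Ev(m+2) - Ev(m+1) - q11 * Ev m + q21 * Ep m"
    unfolding Ep_def Ev_def n3 by (simp add: algebra_simps)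
  thus "v(m+4) - 2*v(m+3) + (1-q11-q22)*v(m+2) + (q11+q22-c*q21)*v(m+1) + (q11*q22-q12*q21)*v m
          = q21*f m + g(m+2) - g(m+1) - q11*g m" by (simp add: Ep0 Ev0)
qed

lemma block_formula:
  fixes zp zv wp wv hp hv :: "nat \<Rightarrow> real" and \<mu> h \<alpha> \<beta> :: real and \<tau> n :: nat
  assumes tau: "\<tau> \<ge> 1" and n: "n \<ge> 1"
    and dp: "\<forall>k. zp (Suc k) = zp k + h * zv k - \<mu>*(h^2/2)*(\<alpha> * hp k + \<beta> * hv k) + wp k"
    and dv: "\<forall>k. zv (Suc k) = zv k - \<mu>*h*(\<alpha> * hp k + \<beta> * hv k) + wv k"
    and hp: "\<forall>k. hp k = (if k < \<tau> then zp 0 + real k * h * zv 0 else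
                zp ((k div \<tau> - 1)*\<tau>) + real (k - (k div \<tau> - 1)*\<tau>) * h * zv ((k div \<tau> - 1)*\<tau>))"
    and hv: "\<forall>k. hv k = (if k < \<tau> then zv 0 else zv ((k div \<tau> - 1)*\<tau>))"
  defines "P \<equiv> zp (n*\<tau>)" and "V \<equiv> zv (n*\<tau>)" and "P' \<equiv> zp ((n-1)*\<tau>)" and "V' \<equiv> zv ((n-1)*\<tau>)"
  shows "s \<le> \<tau> \<Longrightarrow>
    zp (n*\<tau>+s) = P + real s*h*V - \<mu>*h^2*\<alpha>*real s^2/2*P'
       - \<mu>*h^2*(\<alpha>*real \<tau>*h*real s^2/2 + \<alpha>*h*real s*(real s-1)*(2*real s-1)/12 + \<beta>*real s^2/2)*V'
       + (\<Sum>t<s. wp (n*\<tau>+t) + (real s - 1 - real t)*h*wv (n*\<tau>+t)) \<and>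
    zv (n*\<tau>+s) = V - \<mu>*h*\<alpha>*real s*P' - \<mu>*h*(\<alpha>*h*(real \<tau>*real s + real s*(real s-1)/2) + \<beta>*real s)*V'
       + (\<Sum>t<s. wv (n*\<tau>+t))"
proof (induction s)
  case 0 thus ?case by (simp add: P_def V_def)
next
  case (Suc s)
  hence s: "s < \<tau>" by simp
  from Suc.IH s have IHp: "zp (n*\<tau>+s) = P + real s*h*V - \<mu>*h^2*\<alpha>*real s^2/2*P'
       - \<mu>*h^2*(\<alpha>*real \<tau>*h*real s^2/2 + \<alpha>*h*real s*(real s-1)*(2*real s-1)/12 + \<beta>*real s^2/2)*V'
       + (\<Sum>t<s. wp (n*\<tau>+t) + (real s - 1 - real t)*h*wv (n*\<tau>+t))"
    and IHv: "zv (n*\<tau>+s) = V - \<mu>*h*\<alpha>*real s*P' - \<mu>*h*(\<alpha>*h*(real \<tau>*real s + real s*(real s-1)/2) + \<beta>*real s)*V'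
       + (\<Sum>t<s. wv (n*\<tau>+t))" by auto
  let ?k = "n*\<tau>+s"
  have kdiv: "?k div \<tau> = n" using s by simp
  from n obtain n' where n': "n = Suc n'" by (cases n) auto
  have knl: "\<not> ?k < \<tau>" by (simp add: n')
  have kd: "?k - (n - 1)*\<tau> = \<tau> + s" by (simp add: n')
  have hpk: "hp ?k = P' + real (\<tau>+s) * h * V'" using hp knl kdiv kd unfolding P'_def V'_def by simp
  have hvk: "hv ?k = V'" using hv knl kdiv unfolding V'_def by simp
  have sp: "(\<Sum>t<Suc s. wp (n*\<tau>+t) + (real (Suc s) - 1 - real t)*h*wv (n*\<tau>+t))
      = (\<Sum>t<s. wp (n*\<tau>+t) + (real s - 1 - real t)*h*wv (n*\<tau>+t)) + h * (\<Sum>t<s. wv (n*\<tau>+t)) + wp ?k"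
  proof -
    have "(\<Sum>t<Suc s. wp (n*\<tau>+t) + (real (Suc s) - 1 - real t)*h*wv (n*\<tau>+t))
        = (\<Sum>t<s. wp (n*\<tau>+t) + (real (Suc s) - 1 - real t)*h*wv (n*\<tau>+t)) + wp ?k" by simp
    also have "(\<Sum>t<s. wp (n*\<tau>+t) + (real (Suc s) - 1 - real t)*h*wv (n*\<tau>+t))
        = (\<Sum>t<s. (wp (n*\<tau>+t) + (real s - 1 - real t)*h*wv (n*\<tau>+t)) + h * wv (n*\<tau>+t))"
      by (rule sum.cong) (simp_all add: algebra_simps)
    also have "\<dots> = (\<Sum>t<s. wp (n*\<tau>+t) + (real s - 1 - real t)*h*wv (n*\<tau>+t)) + h * (\<Sum>t<s. wv (n*\<tau>+t))"
      by (simp only: sum.distrib sum_distrib_left)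
    finally show ?thesis .
  qed
  have sv: "(\<Sum>t<Suc s. wv (n*\<tau>+t)) = (\<Sum>t<s. wv (n*\<tau>+t)) + wv ?k" by simp
  have "zp (n*\<tau>+Suc s) = zp ?k + h * zv ?k - \<mu>*(h^2/2)*(\<alpha> * hp ?k + \<beta> * hv ?k) + wp ?k"
    using dp by simp
  also have "\<dots> = P + real (Suc s)*h*V - \<mu>*h^2*\<alpha>*real (Suc s)^2/2*P'
       - \<mu>*h^2*(\<alpha>*real \<tau>*h*real (Suc s)^2/2 + \<alpha>*h*real (Suc s)*(real (Suc s)-1)*(2*real (Suc s)-1)/12 + \<beta>*real (Suc s)^2/2)*V'
       + (\<Sum>t<Suc s. wp (n*\<tau>+t) + (real (Suc s) - 1 - real t)*h*wv (n*\<tau>+t))"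
    unfolding sp IHp IHv hpk hvk by (simp add: field_simps power2_eq_square)
  finally have A: "zp (n*\<tau>+Suc s) = P + real (Suc s)*h*V - \<mu>*h^2*\<alpha>*real (Suc s)^2/2*P'
       - \<mu>*h^2*(\<alpha>*real \<tau>*h*real (Suc s)^2/2 + \<alpha>*h*real (Suc s)*(real (Suc s)-1)*(2*real (Suc s)-1)/12 + \<beta>*real (Suc s)^2/2)*V'
       + (\<Sum>t<Suc s. wp (n*\<tau>+t) + (real (Suc s) - 1 - real t)*h*wv (n*\<tau>+t))" .
  have "zv (n*\<tau>+Suc s) = zv ?k - \<mu>*h*(\<alpha> * hp ?k + \<beta> * hv ?k) + wv ?k"
    using dv by simp
  also have "\<dots> = V - \<mu>*h*\<alpha>*real (Suc s)*P' - \<mu>*h*(\<alpha>*h*(real \<tau>*real (Suc s) + real (Suc s)*(real (Suc s)-1)/2) + \<beta>*real (Suc s))*V'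
       + (\<Sum>t<Suc s. wv (n*\<tau>+t))"
    unfolding sv IHv hpk hvk by (simp add: field_simps power2_eq_square)
  finally show ?case using A by simp
qed

lemma noise_sum_bound:
  fixes wp wv :: "nat \<Rightarrow> real"
  assumes s: "s \<le> \<tau>" and wb: "\<forall>k. \<bar>wp k\<bar> \<le> W \<and> \<bar>wv k\<bar> \<le> W" and h: "h > 0"
  shows "\<bar>\<Sum>t<s. wp (j+t) + (real s - 1 - real t)*h*wv (j+t)\<bar> \<le> real \<tau> * (W + real \<tau> * h * W)"
    and "\<bar>\<Sum>t<s. wv (j+t)\<bar> \<le> real \<tau> * (W + real \<tau> * h * W)"
proof -
  have W0: "W \<ge> 0" using wb by (meson abs_ge_zero order_trans)
  have trm: "\<bar>wp (j+t) + (real s - 1 - real t)*h*wv (j+t)\<bar> \<le> W + real \<tau> * h * W" if t: "t < s" for t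
  proof -
    have c: "\<bar>real s - 1 - real t\<bar> \<le> real \<tau>" using t s by linarith
    have "\<bar>(real s - 1 - real t)*h*wv (j+t)\<bar> = \<bar>real s - 1 - real t\<bar>*h*\<bar>wv (j+t)\<bar>"
      using h by (simp add: abs_mult)
    also have "\<dots> \<le> real \<tau> * h * W"
      using c wb h by (intro mult_mono) (auto intro: mult_right_mono)
    finally show ?thesis using wb by (smt (verit))
  qed
  have "\<bar>\<Sum>t<s. wp (j+t) + (real s - 1 - real t)*h*wv (j+t)\<bar> \<le> (\<Sum>t<s. \<bar>wp (j+t) + (real s - 1 - real t)*h*wv (j+t)\<bar>)"
    by (rule sum_abs)
  also have "\<dots> \<le> (\<Sum>t<s. W + real \<tau> * h * W)" using trm by (intro sum_mono) auto
  also have "\<dots> = real s * (W + real \<tau> * h * W)" by simp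
  also have "\<dots> \<le> real \<tau> * (W + real \<tau> * h * W)" using s W0 h by (intro mult_right_mono) auto
  finally show "\<bar>\<Sum>t<s. wp (j+t) + (real s - 1 - real t)*h*wv (j+t)\<bar> \<le> real \<tau> * (W + real \<tau> * h * W)" .
  have "\<bar>\<Sum>t<s. wv (j+t)\<bar> \<le> (\<Sum>t<s. \<bar>wv (j+t)\<bar>)" by (rule sum_abs)
  also have "\<dots> \<le> (\<Sum>t<s. W + real \<tau> * h * W)" using wb W0 h by (intro sum_mono) (smt (verit) mult_nonneg_nonneg of_nat_0_le_iff)
  also have "\<dots> = real s * (W + real \<tau> * h * W)" by simp
  also have "\<dots> \<le> real \<tau> * (W + real \<tau> * h * W)" using s W0 h by (intro mult_right_mono) auto
  finally show "\<bar>\<Sum>t<s. wv (j+t)\<bar> \<le> real \<tau> * (W + real \<tau> * h * W)" .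
qed

lemma abar_coeffs:
  fixes \<mu> h \<alpha> \<beta> t :: real
  defines "q11 \<equiv> - (\<mu>*h^2*\<alpha>*t^2/2)"
    and "q12 \<equiv> - (\<mu>*h^2*(\<alpha>*t*h*t^2/2 + \<alpha>*h*t*(t-1)*(2*t-1)/12 + \<beta>*t^2/2))"
    and "q21 \<equiv> - (\<mu>*h*\<alpha>*t)"
    and "q22 \<equiv> - (\<mu>*h*(\<alpha>*h*(t*t + t*(t-1)/2) + \<beta>*t))"
  shows "1 - q11 - q22 = abar2 \<mu> \<alpha> \<beta> h t"
    and "q11 + q22 - (t*h)*q21 = abar1 \<mu> \<alpha> \<beta> h t"
    and "q11*q22 - q12*q21 = abar0 \<mu> \<alpha> \<beta> h t"
  unfolding q11_def q12_def q21_def q22_def abar0_def abar1_def abar2_def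
  by (simp_all add: field_simps power2_eq_square power4_eq_xxxx)

lemma phi_roots:
  fixes \<mu> h \<alpha> \<beta> t :: real
  assumes t: "t \<ge> 1" and h: "h > 0" and a: "\<alpha> > 0" and b: "\<beta> > 0" and mu: "\<mu> > 0"
    and p1: "phi1 \<mu> \<alpha> \<beta> h t > 0" and p2: "phi2 \<mu> \<alpha> \<beta> h t > 0" and p3: "phi3 \<mu> \<alpha> \<beta> h t > 0"
  shows "\<forall>z::complex. cmod z \<ge> 1 \<longrightarrow> z^4 - 2*z^3 + of_real (abar2 \<mu> \<alpha> \<beta> h t) * z^2
           + of_real (abar1 \<mu> \<alpha> \<beta> h t) * z + of_real (abar0 \<mu> \<alpha> \<beta> h t) \<noteq> 0"
proof (intro allI impI)
  fix z :: complex assume z: "cmod z \<ge> 1"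
  define a0 where "a0 = abar0 \<mu> \<alpha> \<beta> h t"
  define a1 where "a1 = abar1 \<mu> \<alpha> \<beta> h t"
  define a2 where "a2 = abar2 \<mu> \<alpha> \<beta> h t"
  have h0: "\<bar>a0\<bar> < 1" using p1 unfolding phi1_def abar4_def a0_def by simp
  have h1: "\<bar>a1 + 2*a0\<bar> < \<bar>1 - a0^2\<bar>"
  proof -
    have "\<bar>a0^2 - 1^2\<bar> - \<bar>a0 * (-2) - a1 * 1\<bar> > 0" using p2 unfolding phi2_def abar3_def abar4_def a0_def a1_def Let_def by simp
    moreover have "\<bar>a0 * (-2) - a1 * 1\<bar> = \<bar>a1 + 2*a0\<bar>" by (simp add: abs_minus_commute algebra_simps)
    moreover have "\<bar>a0^2 - 1^2\<bar> = \<bar>1 - a0^2\<bar>" by (simp add: abs_minus_commute)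
    ultimately show ?thesis by linarith
  qed
  have h2: "\<bar>(1-a0^2)*(a2*(1-a0)) - (a1+2*a0)*(-2 - a0*a1)\<bar> < \<bar>(1-a0^2)^2 - (a1+2*a0)^2\<bar>"
  proof -
    have "\<bar>(a0^2 - 1^2)^2 - (a0 * (-2) - a1 * 1)^2\<bar>
         - \<bar>- (a0 * a1 - (-2) * 1) * (a0 * (-2) - a1 * 1) + a2 * (a0 + 1) * (a0 - 1)^2\<bar> > 0"
      using p3 unfolding phi3_def abar3_def abar4_def a0_def a1_def a2_def Let_def by simp
    moreover have "(a0^2 - 1^2)^2 - (a0 * (-2) - a1 * 1)^2 = (1-a0^2)^2 - (a1+2*a0)^2"
      by (simp add: algebra_simps power2_eq_square)
    moreover have "- (a0 * a1 - (-2) * 1) * (a0 * (-2) - a1 * 1) + a2 * (a0 + 1) * (a0 - 1)^2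
        = (1-a0^2)*(a2*(1-a0)) - (a1+2*a0)*(-2 - a0*a1)"
      by (simp add: algebra_simps power2_eq_square)
    ultimately show ?thesis by linarith
  qed
  have "1 \<le> t^2" using t by (simp add: one_le_power)
  hence a0nn: "a0 \<ge> 0" unfolding a0_def abar0_def
    by (intro divide_nonneg_pos mult_nonneg_nonneg) auto
  have "a0 + a1 + a2 - 1 = a0 + \<mu>*\<alpha>*h^2*t^2"
    unfolding a0_def a1_def a2_def abar1_def abar2_def by (simp add: field_simps power2_eq_square)
  moreover have "\<mu>*\<alpha>*h^2*t^2 > 0" using mu a h t by simp
  ultimately have pp1: "a0 + a1 + a2 - 1 > 0" using a0nn by linarith
  have "3 + a2 - a1 + a0 = 4 + \<mu>*\<alpha>*h^2*(t*(3*t - 1)) + 2*\<mu>*\<beta>*h*t + a0"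
    unfolding a0_def a1_def a2_def abar1_def abar2_def by (simp add: field_simps power2_eq_square)
  moreover have "\<mu>*\<alpha>*h^2*(t*(3*t - 1)) > 0" using mu a h t by simp
  moreover have "2*\<mu>*\<beta>*h*t > 0" using mu b h t by simp
  ultimately have pm1: "3 + a2 - a1 + a0 > 0" using a0nn by linarith
  show "z^4 - 2*z^3 + of_real (abar2 \<mu> \<alpha> \<beta> h t) * z^2
           + of_real (abar1 \<mu> \<alpha> \<beta> h t) * z + of_real (abar0 \<mu> \<alpha> \<beta> h t) \<noteq> 0"
    using quartic_no_root[OF h0 h1 h2 pp1 pm1 z] unfolding a0_def a1_def a2_def .
qed

lemma abs5: fixes a b c d e x y z :: real
  shows "\<bar>a + b*x - c*y - d*z + e\<bar> \<le> \<bar>a\<bar> + \<bar>b\<bar>*\<bar>x\<bar> + \<bar>c\<bar>*\<bar>y\<bar> + \<bar>d\<bar>*\<bar>z\<bar> + \<bar>e\<bar>"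
proof -
  have "\<bar>a + b*x - c*y - d*z + e\<bar> \<le> \<bar>a + b*x - c*y - d*z\<bar> + \<bar>e\<bar>" by (rule abs_triangle_ineq)
  also have "\<bar>a + b*x - c*y - d*z\<bar> \<le> \<bar>a + b*x - c*y\<bar> + \<bar>d*z\<bar>" by (rule abs_triangle_ineq4)
  also have "\<bar>a + b*x - c*y\<bar> \<le> \<bar>a + b*x\<bar> + \<bar>c*y\<bar>" by (rule abs_triangle_ineq4)
  also have "\<bar>a + b*x\<bar> \<le> \<bar>a\<bar> + \<bar>b*x\<bar>" by (rule abs_triangle_ineq)
  finally show ?thesis by (simp add: abs_mult)
qed

lemma abs_sum5: fixes a b c d e :: real
  shows "\<bar>a - b - c + d + e\<bar> \<le> \<bar>a\<bar> + \<bar>b\<bar> + \<bar>c\<bar> + \<bar>d\<bar> + \<bar>e\<bar>"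
proof -
  have "\<bar>a - b - c + d + e\<bar> \<le> \<bar>a - b - c + d\<bar> + \<bar>e\<bar>" by (rule abs_triangle_ineq)
  also have "\<bar>a - b - c + d\<bar> \<le> \<bar>a - b - c\<bar> + \<bar>d\<bar>" by (rule abs_triangle_ineq)
  also have "\<bar>a - b - c\<bar> \<le> \<bar>a - b\<bar> + \<bar>c\<bar>" by (rule abs_triangle_ineq4)
  also have "\<bar>a - b\<bar> \<le> \<bar>a\<bar> + \<bar>b\<bar>" by (rule abs_triangle_ineq4)
  finally show ?thesis by simp
qed

lemma abs_sum4: fixes a b c d :: real
  shows "\<bar>a + b - c - d\<bar> \<le> \<bar>a\<bar> + \<bar>b\<bar> + \<bar>c\<bar> + \<bar>d\<bar>"
proof -
  have "\<bar>a + b - c - d\<bar> \<le> \<bar>a + b - c\<bar> + \<bar>d\<bar>" by (rule abs_triangle_ineq4)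
  also have "\<bar>a + b - c\<bar> \<le> \<bar>a + b\<bar> + \<bar>c\<bar>" by (rule abs_triangle_ineq4)
  also have "\<bar>a + b\<bar> \<le> \<bar>a\<bar> + \<bar>b\<bar>" by (rule abs_triangle_ineq)
  finally show ?thesis by simp
qed

lemma abs5b: fixes a b c d e x y z :: real
  assumes "\<bar>a\<bar> \<le> B" "\<bar>x\<bar> \<le> B" "\<bar>y\<bar> \<le> B" "\<bar>z\<bar> \<le> B" "\<bar>e\<bar> \<le> F"
  shows "\<bar>a + b*x - c*y - d*z + e\<bar> \<le> B + (\<bar>b\<bar> + \<bar>c\<bar> + \<bar>d\<bar>) * B + F"
proof -
  have "\<bar>b\<bar>*\<bar>x\<bar> \<le> \<bar>b\<bar>*B" "\<bar>c\<bar>*\<bar>y\<bar> \<le> \<bar>c\<bar>*B" "\<bar>d\<bar>*\<bar>z\<bar> \<le> \<bar>d\<bar>*B"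
    using assms by (simp_all add: mult_left_mono)
  moreover have "(\<bar>b\<bar> + \<bar>c\<bar> + \<bar>d\<bar>) * B = \<bar>b\<bar>*B + \<bar>c\<bar>*B + \<bar>d\<bar>*B" by (simp add: algebra_simps)
  ultimately show ?thesis using abs5[of a b x c y d z e] assms by linarith
qed

lemma mode_real_bounded:
  fixes zp zv wp wv hp hv :: "nat \<Rightarrow> real" and \<mu> h \<alpha> \<beta> W :: real and \<tau> :: nat
  assumes h: "h > 0" and tau: "\<tau> \<ge> 1" and a: "\<alpha> > 0" and b: "\<beta> > 0" and mu: "\<mu> > 0"
    and p1: "phi1 \<mu> \<alpha> \<beta> h (real \<tau>) > 0" and p2: "phi2 \<mu> \<alpha> \<beta> h (real \<tau>) > 0"
    and p3: "phi3 \<mu> \<alpha> \<beta> h (real \<tau>) > 0"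
    and dp: "\<forall>k. zp (Suc k) = zp k + h * zv k - \<mu>*(h^2/2)*(\<alpha> * hp k + \<beta> * hv k) + wp k"
    and dv: "\<forall>k. zv (Suc k) = zv k - \<mu>*h*(\<alpha> * hp k + \<beta> * hv k) + wv k"
    and hp: "\<forall>k. hp k = (if k < \<tau> then zp 0 + real k * h * zv 0 else
                zp ((k div \<tau> - 1)*\<tau>) + real (k - (k div \<tau> - 1)*\<tau>) * h * zv ((k div \<tau> - 1)*\<tau>))"
    and hv: "\<forall>k. hv k = (if k < \<tau> then zv 0 else zv ((k div \<tau> - 1)*\<tau>))"
    and wb: "\<forall>k. \<bar>wp k\<bar> \<le> W \<and> \<bar>wv k\<bar> \<le> W"
  shows "\<exists>M. \<forall>k. \<bar>zp k\<bar> \<le> M \<and> \<bar>zv k\<bar> \<le> M"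
proof -
  let ?t = "real \<tau>"
  define q11 where "q11 \<equiv> - (\<mu>*h^2*\<alpha>*?t^2/2)"
  define q12 where "q12 \<equiv> - (\<mu>*h^2*(\<alpha>*?t*h*?t^2/2 + \<alpha>*h*?t*(?t-1)*(2*?t-1)/12 + \<beta>*?t^2/2))"
  define q21 where "q21 \<equiv> - (\<mu>*h*\<alpha>*?t)"
  define q22 where "q22 \<equiv> - (\<mu>*h*(\<alpha>*h*(?t*?t + ?t*(?t-1)/2) + \<beta>*?t))"
  define c where "c = ?t*h"
  define pb where "pb m = zp (m*\<tau>)" for m
  define vb where "vb m = zv (m*\<tau>)" for m
  define f where "f m = (\<Sum>t<\<tau>. wp ((m+1)*\<tau>+t) + (?t - 1 - real t)*h*wv ((m+1)*\<tau>+t))" for m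
  define g where "g m = (\<Sum>t<\<tau>. wv ((m+1)*\<tau>+t))" for m
  define Fb where "Fb = ?t * (W + ?t*h*W)"
  have W0: "W \<ge> 0" using wb by (meson abs_ge_zero order_trans)
  have Fb0: "Fb \<ge> 0" unfolding Fb_def using W0 h by simp
  have fb: "\<bar>f m\<bar> \<le> Fb" "\<bar>g m\<bar> \<le> Fb" for m
    unfolding f_def g_def Fb_def using noise_sum_bound[OF order_refl wb h, where j="(m+1)*\<tau>"] by auto
  have rec: "pb (m+2) = pb (m+1) + c*vb (m+1) + q11*pb m + q12*vb m + f m \<and>
             vb (m+2) = vb (m+1) + q21*pb m + q22*vb m + g m" for m
  proof -
    have n1: "m + 1 \<ge> 1" by simp
    from block_formula[OF tau n1 dp dv hp hv order_refl]
    have bf: "zp ((m+1)*\<tau>+\<tau>) = zp ((m+1)*\<tau>) + ?t*h*zv ((m+1)*\<tau>) - \<mu>*h^2*\<alpha>*?t^2/2*zp ((m+1-1)*\<tau>)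
       - \<mu>*h^2*(\<alpha>*?t*h*?t^2/2 + \<alpha>*h*?t*(?t-1)*(2*?t-1)/12 + \<beta>*?t^2/2)*zv ((m+1-1)*\<tau>)
       + (\<Sum>t<\<tau>. wp ((m+1)*\<tau>+t) + (?t - 1 - real t)*h*wv ((m+1)*\<tau>+t))"
      "zv ((m+1)*\<tau>+\<tau>) = zv ((m+1)*\<tau>) - \<mu>*h*\<alpha>*?t*zp ((m+1-1)*\<tau>) - \<mu>*h*(\<alpha>*h*(?t*?t + ?t*(?t-1)/2) + \<beta>*?t)*zv ((m+1-1)*\<tau>)
       + (\<Sum>t<\<tau>. wv ((m+1)*\<tau>+t))" by auto
    have e: "(m+1)*\<tau>+\<tau> = (m+2)*\<tau>" "m+1-1 = m" by (simp_all add: algebra_simps)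
    show ?thesis using bf unfolding e pb_def vb_def f_def g_def q11_def q12_def q21_def q22_def c_def
      by (simp add: algebra_simps)
  qed
  have recp: "\<forall>m. pb(m+2) = pb(m+1) + c * vb(m+1) + q11 * pb m + q12 * vb m + f m" using rec by blast
  have recv: "\<forall>m. vb(m+2) = vb(m+1) + q21 * pb m + q22 * vb m + g m" using rec by blast
  note cf = abar_coeffs[of \<mu> h \<alpha> ?t \<beta>, folded q11_def q12_def q21_def q22_def]
  have c_eq: "c = ?t*h" by (simp add: c_def)
  note roots = phi_roots[OF _ h a b mu p1 p2 p3]
  have t1: "?t \<ge> 1" using tau by simp
  obtain Bp where Bp: "\<forall>m. \<bar>pb m\<bar> \<le> Bp"
  proof -
    have "\<exists>B. \<forall>m. \<bar>pb m\<bar> \<le> B"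
    proof (rule quartic_rec_bounded[OF roots[OF t1]])
      show "\<forall>m. pb (m + 4) - 2 * pb (m + 3) + abar2 \<mu> \<alpha> \<beta> h ?t * pb (m + 2) + abar1 \<mu> \<alpha> \<beta> h ?t * pb (m + 1) +
            abar0 \<mu> \<alpha> \<beta> h ?t * pb m = f(m+2) - f(m+1) - q22*f m + c*g(m+1) + q12*g m"
        using elim4(1)[OF recp recv] unfolding cf[symmetric] c_eq by simp
      show "\<forall>m. \<bar>f(m+2) - f(m+1) - q22*f m + c*g(m+1) + q12*g m\<bar> \<le> (2 + \<bar>q22\<bar> + \<bar>c\<bar> + \<bar>q12\<bar>) * Fb"
      proof
        fix m
        have "\<bar>q22*f m\<bar> \<le> \<bar>q22\<bar> * Fb" "\<bar>c*g(m+1)\<bar> \<le> \<bar>c\<bar> * Fb" "\<bar>q12*g m\<bar> \<le> \<bar>q12\<bar> * Fb"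
          using fb by (simp_all add: abs_mult mult_left_mono)
        moreover have "\<bar>f(m+2)\<bar> \<le> Fb" "\<bar>f(m+1)\<bar> \<le> Fb" using fb by auto
        moreover have "(2 + \<bar>q22\<bar> + \<bar>c\<bar> + \<bar>q12\<bar>) * Fb = Fb + Fb + \<bar>q22\<bar> * Fb + \<bar>c\<bar> * Fb + \<bar>q12\<bar> * Fb"
          by (simp add: algebra_simps)
        ultimately show "\<bar>f(m+2) - f(m+1) - q22*f m + c*g(m+1) + q12*g m\<bar> \<le> (2 + \<bar>q22\<bar> + \<bar>c\<bar> + \<bar>q12\<bar>) * Fb"
          using abs_sum5[of "f(m+2)" "f(m+1)" "q22*f m" "c*g(m+1)" "q12*g m"] by linarith
      qed
    qed
    thus ?thesis using that by blast
  qed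
  obtain Bv where Bv: "\<forall>m. \<bar>vb m\<bar> \<le> Bv"
  proof -
    have "\<exists>B. \<forall>m. \<bar>vb m\<bar> \<le> B"
    proof (rule quartic_rec_bounded[OF roots[OF t1]])
      show "\<forall>m. vb (m + 4) - 2 * vb (m + 3) + abar2 \<mu> \<alpha> \<beta> h ?t * vb (m + 2) + abar1 \<mu> \<alpha> \<beta> h ?t * vb (m + 1) +
            abar0 \<mu> \<alpha> \<beta> h ?t * vb m = q21*f m + g(m+2) - g(m+1) - q11*g m"
        using elim4(2)[OF recp recv] unfolding cf[symmetric] c_eq by simp
      show "\<forall>m. \<bar>q21*f m + g(m+2) - g(m+1) - q11*g m\<bar> \<le> (2 + \<bar>q21\<bar> + \<bar>q11\<bar>) * Fb"
      proof
        fix m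
        have "\<bar>q21*f m\<bar> \<le> \<bar>q21\<bar> * Fb" "\<bar>q11*g m\<bar> \<le> \<bar>q11\<bar> * Fb"
          using fb by (simp_all add: abs_mult mult_left_mono)
        moreover have "\<bar>g(m+2)\<bar> \<le> Fb" "\<bar>g(m+1)\<bar> \<le> Fb" using fb by auto
        moreover have "(2 + \<bar>q21\<bar> + \<bar>q11\<bar>) * Fb = \<bar>q21\<bar> * Fb + Fb + Fb + \<bar>q11\<bar> * Fb"
          by (simp add: algebra_simps)
        ultimately show "\<bar>q21*f m + g(m+2) - g(m+1) - q11*g m\<bar> \<le> (2 + \<bar>q21\<bar> + \<bar>q11\<bar>) * Fb"
          using abs_sum4[of "q21*f m" "g(m+2)" "g(m+1)" "q11*g m"] by linarith
      qed
    qed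
    thus ?thesis using that by blast
  qed
  define B where "B = max Bp Bv"
  have B: "\<bar>pb m\<bar> \<le> B" "\<bar>vb m\<bar> \<le> B" for m using Bp Bv unfolding B_def by (meson max.coboundedI1 max.coboundedI2)+
  have B0: "B \<ge> 0" using B(1)[of 0] by linarith
  define cA where "cA s = \<bar>real s*h\<bar> + \<bar>\<mu>*h^2*\<alpha>*real s^2/2\<bar>
     + \<bar>\<mu>*h^2*(\<alpha>*?t*h*real s^2/2 + \<alpha>*h*real s*(real s-1)*(2*real s-1)/12 + \<beta>*real s^2/2)\<bar>
     + \<bar>\<mu>*h*\<alpha>*real s\<bar> + \<bar>\<mu>*h*(\<alpha>*h*(?t*real s + real s*(real s-1)/2) + \<beta>*real s)\<bar>" for s
  define CS where "CS = (\<Sum>s<\<tau>. cA s)"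
  have cAle: "cA s \<le> CS" if "s < \<tau>" for s
    unfolding CS_def by (rule member_le_sum) (use that in \<open>auto simp: cA_def\<close>)
  define M0 where "M0 = (\<Sum>k<\<tau>. \<bar>zp k\<bar> + \<bar>zv k\<bar>)"
  have CS0: "CS \<ge> 0" unfolding CS_def cA_def by (intro sum_nonneg) auto
  have M00: "M0 \<ge> 0" unfolding M0_def by (intro sum_nonneg) auto
  define M where "M = M0 + B + CS*B + Fb"
  have "\<bar>zp k\<bar> \<le> M \<and> \<bar>zv k\<bar> \<le> M" for k
  proof (cases "k < \<tau>")
    case True
    have "\<bar>zp k\<bar> + \<bar>zv k\<bar> \<le> M0" unfolding M0_def
      by (rule member_le_sum[of k "{..<\<tau>}" "\<lambda>k. \<bar>zp k\<bar> + \<bar>zv k\<bar>"]) (use True in auto)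
    moreover have "CS*B \<ge> 0" using CS0 B0 by simp
    ultimately show ?thesis unfolding M_def using B0 Fb0 by auto
  next
    case False
    define n where "n = k div \<tau>"
    define s where "s = k mod \<tau>"
    have k: "k = n*\<tau> + s" unfolding n_def s_def by simp
    have s: "s < \<tau>" unfolding s_def using tau by simp
    have n: "n \<ge> 1" unfolding n_def using div_le_mono[of \<tau> k \<tau>] False tau by simp
    from block_formula[OF tau n dp dv hp hv less_imp_le[OF s]]
    have bfp: "zp k = zp (n*\<tau>) + real s*h*zv (n*\<tau>) - \<mu>*h^2*\<alpha>*real s^2/2*zp ((n-1)*\<tau>)
       - \<mu>*h^2*(\<alpha>*?t*h*real s^2/2 + \<alpha>*h*real s*(real s-1)*(2*real s-1)/12 + \<beta>*real s^2/2)*zv ((n-1)*\<tau>)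
       + (\<Sum>t<s. wp (n*\<tau>+t) + (real s - 1 - real t)*h*wv (n*\<tau>+t))"
      and bfv: "zv k = zv (n*\<tau>) - \<mu>*h*\<alpha>*real s*zp ((n-1)*\<tau>) - \<mu>*h*(\<alpha>*h*(?t*real s + real s*(real s-1)/2) + \<beta>*real s)*zv ((n-1)*\<tau>)
       + (\<Sum>t<s. wv (n*\<tau>+t))" unfolding k by auto
    have Bs: "\<bar>zp (n*\<tau>)\<bar> \<le> B" "\<bar>zv (n*\<tau>)\<bar> \<le> B" "\<bar>zp ((n-1)*\<tau>)\<bar> \<le> B" "\<bar>zv ((n-1)*\<tau>)\<bar> \<le> B"
      using B unfolding pb_def vb_def by auto
    have nb: "\<bar>\<Sum>t<s. wp (n*\<tau>+t) + (real s - 1 - real t)*h*wv (n*\<tau>+t)\<bar> \<le> Fb"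
             "\<bar>\<Sum>t<s. wv (n*\<tau>+t)\<bar> \<le> Fb"
      unfolding Fb_def using noise_sum_bound[OF less_imp_le[OF s] wb h] by auto
    have "\<bar>zp k\<bar> \<le> B + (\<bar>real s*h\<bar> + \<bar>\<mu>*h^2*\<alpha>*real s^2/2\<bar>
          + \<bar>\<mu>*h^2*(\<alpha>*?t*h*real s^2/2 + \<alpha>*h*real s*(real s-1)*(2*real s-1)/12 + \<beta>*real s^2/2)\<bar>) * B + Fb"
      unfolding bfp by (rule abs5b[OF Bs(1,2,3,4) nb(1)])
    also have "\<dots> \<le> B + cA s * B + Fb"
      using B0 by (intro add_mono mult_right_mono) (auto simp: cA_def)
    also have "\<dots> \<le> B + CS * B + Fb" using cAle[OF s] B0 by (simp add: mult_right_mono)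
    finally have P: "\<bar>zp k\<bar> \<le> M" unfolding M_def using M00 by simp
    have "\<bar>zv k\<bar> \<le> B + (0 + \<bar>\<mu>*h*\<alpha>*real s\<bar> + \<bar>\<mu>*h*(\<alpha>*h*(?t*real s + real s*(real s-1)/2) + \<beta>*real s)\<bar>) * B + Fb"
      using abs5b[OF Bs(2,1,3,4) nb(2), of 0] unfolding bfv by simp
    also have "\<dots> \<le> B + cA s * B + Fb"
      using B0 by (intro add_mono mult_right_mono) (auto simp: cA_def)
    also have "\<dots> \<le> B + CS * B + Fb" using cAle[OF s] B0 by (simp add: mult_right_mono)
    finally have V: "\<bar>zv k\<bar> \<le> M" unfolding M_def using M00 by simp
    from P V show ?thesis ..
  qed
  thus ?thesis by blast
qed

lemma Amap_pow: "(Amap h ^^ j) x = (fst x + (real j * h) *\<^sub>R snd x, snd x)"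
  by (induction j arbitrary: x) (auto simp: Amap_def algebra_simps)

definition zhat :: "nat \<Rightarrow> real \<Rightarrow> (nat \<Rightarrow> 'a::euclidean_space \<times> 'a) \<Rightarrow> nat \<Rightarrow> 'a \<times> 'a" where
  "zhat \<tau> h z k = (if k < \<tau> then (Amap h ^^ k) (z 0)
      else (Amap h ^^ (k - (k div \<tau> - 1) * \<tau>)) (z ((k div \<tau> - 1) * \<tau>)))"

lemma mode_vec_bounded:
  fixes z \<omega> :: "nat \<Rightarrow> 'a::euclidean_space \<times> 'a" and \<mu> h \<alpha> \<beta> W :: real and \<tau> :: nat
  assumes h: "h > 0" and tau: "\<tau> \<ge> 1" and a: "\<alpha> > 0" and b: "\<beta> > 0" and mu: "\<mu> > 0"
    and p1: "phi1 \<mu> \<alpha> \<beta> h (real \<tau>) > 0" and p2: "phi2 \<mu> \<alpha> \<beta> h (real \<tau>) > 0"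
    and p3: "phi3 \<mu> \<alpha> \<beta> h (real \<tau>) > 0"
    and dyn: "\<forall>k. z (Suc k) = Amap h (z k) - \<mu> *\<^sub>R Bmap h (Kmap \<alpha> \<beta> (zhat \<tau> h z k)) + \<omega> k"
    and wb: "\<forall>k. norm (\<omega> k) \<le> W"
  shows "\<exists>M. \<forall>k. norm (z k) \<le> M"
proof -
  have comp: "\<exists>M. \<forall>k. \<bar>inner (fst (z k)) e\<bar> \<le> M \<and> \<bar>inner (snd (z k)) e\<bar> \<le> M" if e: "e \<in> Basis" for e
  proof (rule mode_real_bounded[OF h tau a b mu p1 p2 p3])
    let ?zp = "\<lambda>k. inner (fst (z k)) e" and ?zv = "\<lambda>k. inner (snd (z k)) e"
    let ?hp = "\<lambda>k. inner (fst (zhat \<tau> h z k)) e" and ?hv = "\<lambda>k. inner (snd (zhat \<tau> h z k)) e"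
    let ?wp = "\<lambda>k. inner (fst (\<omega> k)) e" and ?wv = "\<lambda>k. inner (snd (\<omega> k)) e"
    show "\<forall>k. ?zp (Suc k) = ?zp k + h * ?zv k - \<mu>*(h^2/2)*(\<alpha> * ?hp k + \<beta> * ?hv k) + ?wp k"
      using dyn by (simp add: Amap_def Bmap_def Kmap_def inner_add_left inner_diff_left algebra_simps)
    show "\<forall>k. ?zv (Suc k) = ?zv k - \<mu>*h*(\<alpha> * ?hp k + \<beta> * ?hv k) + ?wv k"
      using dyn by (simp add: Amap_def Bmap_def Kmap_def inner_add_left inner_diff_left algebra_simps)
    show "\<forall>k. ?hp k = (if k < \<tau> then ?zp 0 + real k * h * ?zv 0 else
                ?zp ((k div \<tau> - 1)*\<tau>) + real (k - (k div \<tau> - 1)*\<tau>) * h * ?zv ((k div \<tau> - 1)*\<tau>))"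
      by (simp add: zhat_def Amap_pow inner_add_left)
    show "\<forall>k. ?hv k = (if k < \<tau> then ?zv 0 else ?zv ((k div \<tau> - 1)*\<tau>))"
      by (simp add: zhat_def Amap_pow)
    show "\<forall>k. \<bar>?wp k\<bar> \<le> W \<and> \<bar>?wv k\<bar> \<le> W"
    proof
      fix k
      have "\<bar>?wp k\<bar> \<le> norm (fst (\<omega> k))" using e by (rule Basis_le_norm)
      also have "\<dots> \<le> norm (\<omega> k)" by (metis norm_fst_le prod.collapse)
      finally have 1: "\<bar>?wp k\<bar> \<le> W" using wb by (meson order_trans)
      have "\<bar>?wv k\<bar> \<le> norm (snd (\<omega> k))" using e by (rule Basis_le_norm)
      also have "\<dots> \<le> norm (\<omega> k)" by (metis norm_snd_le prod.collapse)
      finally have 2: "\<bar>?wv k\<bar> \<le> W" using wb by (meson order_trans)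
      show "\<bar>?wp k\<bar> \<le> W \<and> \<bar>?wv k\<bar> \<le> W" using 1 2 ..
    qed
  qed
  then obtain Mf where Mf: "\<forall>e\<in>Basis. \<forall>k. \<bar>inner (fst (z k)) e\<bar> \<le> Mf e \<and> \<bar>inner (snd (z k)) e\<bar> \<le> Mf e"
    by metis
  have "norm (z k) \<le> 2 * (\<Sum>e\<in>(Basis::'a set). Mf e)" for k
  proof -
    have "norm (z k) \<le> norm (fst (z k)) + norm (snd (z k))" by (metis norm_Pair_le prod.collapse)
    also have "norm (fst (z k)) \<le> (\<Sum>e\<in>Basis. \<bar>inner (fst (z k)) e\<bar>)" by (rule norm_le_l1)
    also have "\<dots> \<le> (\<Sum>e\<in>(Basis::'a set). Mf e)" using Mf by (intro sum_mono) auto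
    also have "norm (snd (z k)) \<le> (\<Sum>e\<in>Basis. \<bar>inner (snd (z k)) e\<bar>)" by (rule norm_le_l1)
    also have "\<dots> \<le> (\<Sum>e\<in>(Basis::'a set). Mf e)" using Mf by (intro sum_mono) auto
    finally show ?thesis by simp
  qed
  thus ?thesis by blast
qed

lemma mat_mult_entry:
  fixes A B :: "'a::comm_ring_1 mat"
  assumes "A \<in> carrier_mat n n" "B \<in> carrier_mat n n" "i < n" "j < n"
  shows "(A * B) $$ (i,j) = (\<Sum>k<n. A $$ (i,k) * B $$ (k,j))"
  using assms by (simp add: scalar_prod_def atLeast0LessThan)

lemma lap_entry:
  assumes "i < N" "j < N"
  shows "laplacian N adj $$ (i,j) = (if i = j then (\<Sum>l<N. adj i l) else - adj i j)"
  using assms by (simp add: laplacian_def)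

lemma lap_row:
  fixes y :: "nat \<Rightarrow> 'b::real_vector"
  assumes irr: "\<forall>i<N. adj i i = 0" and i: "i < N"
  shows "(\<Sum>j<N. laplacian N adj $$ (i,j) *\<^sub>R y j) = (\<Sum>j<N. adj i j *\<^sub>R (y i - y j))"
proof -
  have "laplacian N adj $$ (i,j) = (if i = j then (\<Sum>l<N. adj i l) else 0) - adj i j" if "j < N" for j
    using that i irr by (auto simp: lap_entry)
  hence "(\<Sum>j<N. laplacian N adj $$ (i,j) *\<^sub>R y j)
      = (\<Sum>j<N. (if i = j then (\<Sum>l<N. adj i l) else 0) *\<^sub>R y j) - (\<Sum>j<N. adj i j *\<^sub>R y j)"
    by (simp add: scaleR_diff_left sum_subtractf)
  also have "(\<Sum>j<N. (if i = j then (\<Sum>l<N. adj i l) else 0) *\<^sub>R y j) = (\<Sum>l<N. adj i l) *\<^sub>R y i"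
    using i by (simp add: if_distrib[of "\<lambda>c. c *\<^sub>R _"] cong: if_cong)
  also have "\<dots> = (\<Sum>j<N. adj i j *\<^sub>R y i)" by (simp add: scaleR_sum_left)
  finally show ?thesis by (simp add: scaleR_diff_right sum_subtractf)
qed

lemma lap_quad:
  fixes c :: "nat \<Rightarrow> real"
  assumes irr: "\<forall>i<N. adj i i = 0" and sym: "\<forall>i<N. \<forall>j<N. adj i j = adj j i"
  shows "2 * (\<Sum>i<N. c i * (\<Sum>j<N. laplacian N adj $$ (i,j) * c j))
       = (\<Sum>i<N. \<Sum>j<N. adj i j * (c i - c j)^2)"
proof -
  have row: "(\<Sum>j<N. laplacian N adj $$ (i,j) * c j) = (\<Sum>j<N. adj i j * (c i - c j))" if "i < N" for i
    using lap_row[where N=N and adj=adj and i=i and y=c, OF irr that] by simp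
  define S where "S = (\<Sum>i<N. \<Sum>j<N. adj i j * (c i * (c i - c j)))"
  have symf: "\<And>i j. i < N \<Longrightarrow> j < N \<Longrightarrow> adj j i = adj i j" using sym by blast
  have rowi: "c i * (\<Sum>j<N. laplacian N adj $$ (i,j) * c j) = (\<Sum>j<N. adj i j * (c i * (c i - c j)))" if "i < N" for i
    unfolding row[OF that] by (simp add: sum_distrib_left algebra_simps)
  have "(\<Sum>i<N. c i * (\<Sum>j<N. laplacian N adj $$ (i,j) * c j)) = S"
    unfolding S_def by (intro sum.cong refl) (simp add: rowi)
  moreover have "S = (\<Sum>i<N. \<Sum>j<N. adj j i * (c j * (c j - c i)))"
    unfolding S_def by (rule sum.swap)
  moreover have "\<dots> = (\<Sum>i<N. \<Sum>j<N. adj i j * (c j * (c j - c i)))"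
    by (intro sum.cong refl) (metis lessThan_iff symf)
  ultimately have "2 * (\<Sum>i<N. c i * (\<Sum>j<N. laplacian N adj $$ (i,j) * c j))
      = (\<Sum>i<N. \<Sum>j<N. adj i j * (c i * (c i - c j))) + (\<Sum>i<N. \<Sum>j<N. adj i j * (c j * (c j - c i)))"
    unfolding S_def by simp
  also have "\<dots> = (\<Sum>i<N. \<Sum>j<N. adj i j * (c i - c j)^2)"
    by (simp add: sum.distrib[symmetric] algebra_simps power2_eq_square)
  finally show ?thesis .
qed

lemma adj_term_nonneg:
  assumes nn: "\<forall>i<N. \<forall>j<N. adj i j = 0 \<or> adj i j = 1" and "a < N" "b < N"
  shows "adj a b * (c a - c b)^2 \<ge> (0::real)"
proof -
  have "adj a b \<ge> 0" using nn assms(2,3) by force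
  thus ?thesis by simp
qed

lemma lap_psd:
  fixes c :: "nat \<Rightarrow> real"
  assumes irr: "\<forall>i<N. adj i i = 0" and sym: "\<forall>i<N. \<forall>j<N. adj i j = adj j i"
    and nn: "\<forall>i<N. \<forall>j<N. adj i j = 0 \<or> adj i j = 1"
  shows "(\<Sum>i<N. c i * (\<Sum>j<N. laplacian N adj $$ (i,j) * c j)) \<ge> 0"
proof -
  have "(\<Sum>i<N. \<Sum>j<N. adj i j * (c i - c j)^2) \<ge> 0"
    by (intro sum_nonneg) (simp add: adj_term_nonneg[OF nn])
  thus ?thesis using lap_quad[OF irr sym, of c] by simp
qed

lemma lap_kernel_const:
  fixes c :: "nat \<Rightarrow> real"
  assumes irr: "\<forall>i<N. adj i i = 0" and sym: "\<forall>i<N. \<forall>j<N. adj i j = adj j i"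
    and nn: "\<forall>i<N. \<forall>j<N. adj i j = 0 \<or> adj i j = 1"
    and conn: "graph_connected N adj"
    and ker: "\<forall>i<N. (\<Sum>j<N. laplacian N adj $$ (i,j) * c j) = 0"
    and ij: "i < N" "j < N"
  shows "c i = c j"
proof -
  have "(\<Sum>i<N. c i * (\<Sum>j<N. laplacian N adj $$ (i,j) * c j)) = 0"
    using ker by simp
  hence tot: "(\<Sum>i<N. \<Sum>j<N. adj i j * (c i - c j)^2) = 0"
    using lap_quad[OF irr sym, of c] by simp
  have nn1: "\<And>i. i\<in>{..<N} \<Longrightarrow> 0 \<le> (\<Sum>j<N. adj i j * (c i - c j)^2)"
    by (auto intro!: sum_nonneg adj_term_nonneg[OF nn])
  have all0: "\<forall>i\<in>{..<N}. (\<Sum>j<N. adj i j * (c i - c j)^2) = 0"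
    using sum_nonneg_eq_0_iff[where A="{..<N}" and f="\<lambda>i. (\<Sum>j<N. adj i j * (c i - c j)^2)", OF finite_lessThan nn1] tot by blast
  have z: "adj a b * (c a - c b)^2 = 0" if ab: "a < N" "b < N" for a b
  proof -
    have nn2: "\<And>j. j\<in>{..<N} \<Longrightarrow> 0 \<le> adj a j * (c a - c j)^2"
      using ab by (auto intro!: adj_term_nonneg[OF nn])
    have "(\<Sum>j<N. adj a j * (c a - c j)^2) = 0" using all0 ab by simp
    hence "\<forall>j\<in>{..<N}. adj a j * (c a - c j)^2 = 0"
      using sum_nonneg_eq_0_iff[where A="{..<N}" and f="\<lambda>j. adj a j * (c a - c j)^2", OF finite_lessThan nn2] by blast
    thus ?thesis using ab by simp
  qed
  have edge: "c a = c b" if "(a, b) \<in> {(a, b). a < N \<and> b < N \<and> adj a b = 1}" for a b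
    using z[of a b] that by auto
  have "(i, j) \<in> {(a, b). a < N \<and> b < N \<and> adj a b = 1}\<^sup>*" using conn ij unfolding graph_connected_def by blast
  thus ?thesis
  proof (induction rule: rtrancl_induct)
    case base thus ?case by simp
  next
    case (step y z) thus ?case using edge[OF step.hyps(2)] by simp
  qed
qed

lemma phi3_zero: "phi3 0 \<alpha> \<beta> h t = 0"
  by (simp add: phi3_def abar0_def abar1_def abar2_def abar3_def abar4_def Let_def)

lemma lap_carrier: "laplacian N adj \<in> carrier_mat N N"
  by (simp add: laplacian_def)

lemma mat_vec_entry:
  fixes A :: "'a::comm_ring_1 mat"
  assumes "A \<in> carrier_mat n n" "v \<in> carrier_vec n" "i < n"
  shows "(A *\<^sub>v v) $ i = (\<Sum>k<n. A $$ (i,k) * v $ k)"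
  using assms by (simp add: scalar_prod_def atLeast0LessThan)

lemma spectral_setup:
  fixes N :: nat and adj :: "nat \<Rightarrow> nat \<Rightarrow> real" and lam :: "nat \<Rightarrow> real"
  assumes N2: "N \<ge> 2"
    and adj01: "\<forall>i<N. \<forall>j<N. adj i j = 0 \<or> adj i j = 1"
    and adj_sym: "\<forall>i<N. \<forall>j<N. adj i j = adj j i"
    and adj_irrefl: "\<forall>i<N. adj i i = 0"
    and eig: "char_poly (laplacian N adj) = (\<Prod>i<N. [:- lam i, 1:])"
    and eig_sorted: "\<forall>i j. i \<le> j \<and> j < N \<longrightarrow> lam i \<le> lam j"
    and conn: "graph_connected N adj"
    and phi3: "\<forall>i\<in>{1..<N}. phi3 (lam i) \<alpha> \<beta> h t > 0"
  shows "\<exists>P Q T. P \<in> carrier_mat N N \<and> Q \<in> carrier_mat N N \<and> T \<in> carrier_mat N N \<and>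
     P * Q = 1\<^sub>m N \<and> Q * laplacian N adj = T * Q \<and> (\<forall>m<N. T $$ (m,m) = lam m) \<and>
     (\<forall>m<N. \<forall>m'<m. T $$ (m,m') = 0) \<and> (\<forall>i<N. \<forall>j<N. P $$ (i,0) = P $$ (j,0)) \<and>
     (\<forall>i\<in>{1..<N}. lam i > 0)"
proof -
  let ?L = "laplacian N adj"
  have L: "?L \<in> carrier_mat N N" by (rule lap_carrier)
  define es where "es = map lam [0..<N]"
  have cp: "char_poly ?L = (\<Prod>a\<leftarrow>es. [:- a, 1:])"
  proof -
    have "(\<Prod>a\<leftarrow>es. [:- a, 1:]) = (\<Prod>i\<leftarrow>[0..<N]. [:- lam i, 1:])"
      unfolding es_def by (simp add: o_def)
    also have "\<dots> = (\<Prod>i\<in>set [0..<N]. [:- lam i, 1:])"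
      by (rule prod.distinct_set_conv_list[symmetric]) simp
    also have "\<dots> = (\<Prod>i<N. [:- lam i, 1:])" by (simp add: atLeast0LessThan)
    finally show ?thesis using eig by simp
  qed
  obtain T P Q where sd: "schur_decomposition ?L es = (T,P,Q)" by (cases "schur_decomposition ?L es") auto
  from schur_decomposition[OF L cp sd]
  have sim: "similar_mat_wit ?L T P Q" and ut: "upper_triangular T" and dg: "diag_mat T = es" by auto
  note sw = similar_mat_witD2[OF L sim]
  have T: "T \<in> carrier_mat N N" and P: "P \<in> carrier_mat N N" and Q: "Q \<in> carrier_mat N N"
    using sw by auto
  have PQ: "P * Q = 1\<^sub>m N" and QP: "Q * P = 1\<^sub>m N" and LPTQ: "?L = P * T * Q" using sw by auto
  have QL: "Q * ?L = T * Q"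
  proof -
    have "Q * ?L = Q * (P * T * Q)" using LPTQ by simp
    also have "\<dots> = (Q * P) * T * Q" using P Q T by (simp add: assoc_mult_mat[of _ N N _ N _ N])
    also have "\<dots> = T * Q" using QP T Q by simp
    finally show ?thesis .
  qed
  have LP: "?L * P = P * T"
  proof -
    have "?L * P = (P * T * Q) * P" using LPTQ by simp
    also have "\<dots> = P * T * (Q * P)" using P Q T by (simp add: assoc_mult_mat[of _ N N _ N _ N])
    also have "\<dots> = P * T" using QP T P by simp
    finally show ?thesis .
  qed
  have Tdiag: "T $$ (m,m) = lam m" if "m < N" for m
  proof -
    have "diag_mat T ! m = es ! m" using dg by simp
    thus ?thesis using that T unfolding diag_mat_def es_def by simp
  qed
  have Tut: "T $$ (m,m') = 0" if "m < N" "m' < m" for m m'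
    using ut that T unfolding upper_triangular_def by auto
  have polyL: "poly (char_poly ?L) x = (\<Prod>i<N. x - lam i)" for x
    unfolding eig poly_prod by simp
  have lam_nn: "lam i \<ge> 0" if i: "i < N" for i
  proof -
    have "poly (char_poly ?L) (lam i) = 0" unfolding polyL using i by (intro prod_zero) auto
    hence "eigenvalue ?L (lam i)" using eigenvalue_root_char_poly[OF L] by simp
    then obtain v where ev: "eigenvector ?L v (lam i)" unfolding eigenvalue_def by blast
    hence v: "v \<in> carrier_vec N" and v0: "v \<noteq> 0\<^sub>v N" and Lv: "?L *\<^sub>v v = lam i \<cdot>\<^sub>v v"
      unfolding eigenvector_def using L by auto
    define c where "c k = v $ k" for k
    have row: "(\<Sum>j<N. ?L $$ (k,j) * c j) = lam i * c k" if "k < N" for k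
    proof -
      have "(?L *\<^sub>v v) $ k = (\<Sum>j<N. ?L $$ (k,j) * v $ j)" by (rule mat_vec_entry[OF L v that])
      thus ?thesis unfolding Lv c_def using that v by simp
    qed
    have "(\<Sum>k<N. c k * (\<Sum>j<N. ?L $$ (k,j) * c j)) = (\<Sum>k<N. c k * (lam i * c k))"
      by (intro sum.cong refl) (simp add: row)
    also have "\<dots> = lam i * (\<Sum>k<N. c k^2)"
      by (simp add: sum_distrib_left power2_eq_square algebra_simps)
    finally have "(\<Sum>k<N. c k * (\<Sum>j<N. ?L $$ (k,j) * c j)) = lam i * (\<Sum>k<N. c k^2)" .
    moreover have "(\<Sum>k<N. c k * (\<Sum>j<N. ?L $$ (k,j) * c j)) \<ge> 0"
      by (rule lap_psd[OF adj_irrefl adj_sym adj01])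
    moreover have "(\<Sum>k<N. c k^2) > 0"
    proof -
      have "\<exists>k<N. v $ k \<noteq> 0"
      proof (rule ccontr)
        assume "\<not> (\<exists>k<N. v $ k \<noteq> 0)"
        hence "\<forall>k<N. v $ k = 0" by auto
        hence "v = 0\<^sub>v N" using v by (intro eq_vecI) auto
        thus False using v0 by simp
      qed
      then obtain k where k: "k < N" "v $ k \<noteq> 0" by blast
      have "c k^2 > 0" using k unfolding c_def by simp
      moreover have "c k^2 \<le> (\<Sum>k<N. c k^2)" by (rule member_le_sum) (use k in auto)
      ultimately show ?thesis by linarith
    qed
    ultimately show ?thesis by (simp add: zero_le_mult_iff)
  qed
  have lam0: "lam 0 = 0"
  proof -
    define v where "v = vec N (\<lambda>_. 1::real)"
    have v: "v \<in> carrier_vec N" unfolding v_def by simp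
    have "?L *\<^sub>v v = 0 \<cdot>\<^sub>v v"
    proof (rule eq_vecI)
      fix k assume k: "k < dim_vec (0 \<cdot>\<^sub>v v)"
      hence k': "k < N" using v by simp
      have "(?L *\<^sub>v v) $ k = (\<Sum>j<N. ?L $$ (k,j) * v $ j)" by (rule mat_vec_entry[OF L v k'])
      also have "\<dots> = (\<Sum>j<N. ?L $$ (k,j) * 1)" unfolding v_def by (intro sum.cong) auto
      also have "\<dots> = (\<Sum>j<N. adj k j * (1 - 1))"
        using lap_row[where N=N and adj=adj and i=k and y="\<lambda>_. 1::real", OF adj_irrefl k'] by simp
      finally show "(?L *\<^sub>v v) $ k = (0 \<cdot>\<^sub>v v) $ k" using k' v by simp
    qed (use v L in simp)
    moreover have "v \<noteq> 0\<^sub>v N"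
    proof
      assume "v = 0\<^sub>v N"
      hence "v $ 0 = 0\<^sub>v N $ 0" by simp
      thus False using N2 unfolding v_def by simp
    qed
    ultimately have "eigenvector ?L v 0" unfolding eigenvector_def using v L by simp
    hence "eigenvalue ?L 0" unfolding eigenvalue_def by blast
    hence "poly (char_poly ?L) 0 = 0" using eigenvalue_root_char_poly[OF L] by simp
    hence "(\<Prod>i<N. 0 - lam i) = 0" unfolding polyL .
    then obtain j where j: "j < N" "lam j = 0" by auto
    hence "lam 0 \<le> 0" using eig_sorted[rule_format, of 0 j] by simp
    moreover have "lam 0 \<ge> 0" using lam_nn N2 by simp
    ultimately show ?thesis by simp
  qed
  have lampos: "\<forall>i\<in>{1..<N}. lam i > 0"
  proof
    fix i assume i: "i \<in> {1..<N}"
    have ph: "phi3 (lam i) \<alpha> \<beta> h t > 0" using phi3 i by blast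
    have "lam i \<noteq> 0"
    proof
      assume "lam i = 0"
      with ph show False by (simp add: phi3_zero)
    qed
    moreover have "lam i \<ge> 0" using lam_nn i by simp
    ultimately show "lam i > 0" by simp
  qed
  have Pcol: "\<forall>i<N. \<forall>j<N. P $$ (i,0) = P $$ (j,0)"
  proof (intro allI impI)
    fix i j assume ij: "i < N" "j < N"
    show "P $$ (i,0) = P $$ (j,0)"
    proof (rule lap_kernel_const[OF adj_irrefl adj_sym adj01 conn _ ij, where c="\<lambda>k. P $$ (k,0)"], intro allI impI)
      fix a assume a: "a < N"
      have N0: "0 < N" using N2 by simp
      have "(\<Sum>k<N. ?L $$ (a,k) * P $$ (k,0)) = (?L * P) $$ (a,0)"
        by (rule mat_mult_entry[OF L P a N0, symmetric])
      also have "\<dots> = (P * T) $$ (a,0)" unfolding LP ..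
      also have "\<dots> = (\<Sum>m<N. P $$ (a,m) * T $$ (m,0))" by (rule mat_mult_entry[OF P T a N0])
      also have "\<dots> = (\<Sum>m<N. if m = 0 then P $$ (a,0) * T $$ (0,0) else 0)"
        by (intro sum.cong refl) (auto simp: Tut)
      also have "\<dots> = 0" using N0 Tdiag[OF N0] lam0 by simp
      finally show "(\<Sum>k<N. ?L $$ (a,k) * P $$ (k,0)) = 0" .
    qed
  qed
  have "\<forall>m<N. T $$ (m,m) = lam m" using Tdiag by blast
  moreover have "\<forall>m<N. \<forall>m'<m. T $$ (m,m') = 0" using Tut by blast
  ultimately show ?thesis using P Q T PQ QL Pcol lampos by blast
qed

lemma Amap_sum:
  fixes y :: "nat \<Rightarrow> 'a::euclidean_space \<times> 'a"
  shows "(Amap h ^^ j) (\<Sum>l\<in>A. c l *\<^sub>R y l) = (\<Sum>l\<in>A. c l *\<^sub>R (Amap h ^^ j) (y l))"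
  unfolding Amap_pow
  by (simp add: prod_eq_iff fst_sum snd_sum scaleR_sum_right sum.distrib algebra_simps)

lemma Amap_sum1:
  fixes y :: "nat \<Rightarrow> 'a::euclidean_space \<times> 'a"
  shows "Amap h (\<Sum>l\<in>A. c l *\<^sub>R y l) = (\<Sum>l\<in>A. c l *\<^sub>R Amap h (y l))"
  using Amap_sum[where h=h and j=1 and c=c and y=y and A=A] by simp

lemma BK_linear: "linear (\<lambda>v::'a::euclidean_space \<times> 'a. Bmap h (Kmap \<alpha> \<beta> v))"
  by (rule linearI) (simp_all add: Bmap_def Kmap_def algebra_simps)

lemma double_sum_scaleR:
  fixes y :: "nat \<Rightarrow> 'b::real_vector"
  shows "(\<Sum>l\<in>A. a l *\<^sub>R (\<Sum>j\<in>B. b l j *\<^sub>R y j)) = (\<Sum>j\<in>B. (\<Sum>l\<in>A. a l * b l j) *\<^sub>R y j)"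
  by (simp add: scaleR_sum_right scaleR_sum_left sum.swap[of _ A])

lemma tri_split:
  fixes V :: "nat \<Rightarrow> 'b::real_vector"
  assumes m: "m < N" and z: "\<forall>m'<m. t m' = 0"
  shows "(\<Sum>m'<N. t m' *\<^sub>R V m') = t m *\<^sub>R V m + (\<Sum>m'\<in>{m<..<N}. t m' *\<^sub>R V m')"
proof -
  have e: "{..<N} = {..<m} \<union> insert m {m<..<N}" using m by auto
  have "(\<Sum>m'<N. t m' *\<^sub>R V m') = (\<Sum>m'\<in>{..<m}. t m' *\<^sub>R V m') + (\<Sum>m'\<in>insert m {m<..<N}. t m' *\<^sub>R V m')"
    unfolding e by (rule sum.union_disjoint) auto
  also have "(\<Sum>m'\<in>{..<m}. t m' *\<^sub>R V m') = 0" using z by simp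
  also have "(\<Sum>m'\<in>insert m {m<..<N}. t m' *\<^sub>R V m') = t m *\<^sub>R V m + (\<Sum>m'\<in>{m<..<N}. t m' *\<^sub>R V m')"
    by (rule sum.insert) auto
  finally show ?thesis by simp
qed

lemma norm_fst': "norm (fst v) \<le> norm v" by (metis norm_fst_le prod.collapse)
lemma norm_snd': "norm (snd v) \<le> norm v" by (metis norm_snd_le prod.collapse)

lemma Amap_pow_norm:
  fixes x :: "'a::euclidean_space \<times> 'a"
  assumes h: "h > 0"
  shows "norm ((Amap h ^^ j) x) \<le> (2 + real j * h) * norm x"
proof -
  have "norm ((Amap h ^^ j) x) \<le> norm (fst x + (real j * h) *\<^sub>R snd x) + norm (snd x)"
    unfolding Amap_pow by (rule norm_Pair_le)
  also have "\<dots> \<le> norm (fst x) + real j * h * norm (snd x) + norm (snd x)"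
    using h by (simp add: norm_triangle_le)
  also have "\<dots> \<le> norm x + real j * h * norm x + norm x"
    using h norm_fst'[of x] norm_snd'[of x] by (intro add_mono mult_left_mono) auto
  finally show ?thesis by (simp add: algebra_simps)
qed

lemma zhat_bound:
  fixes y :: "nat \<Rightarrow> 'a::euclidean_space \<times> 'a"
  assumes h: "h > 0" and tau: "\<tau> \<ge> 1" and M: "\<forall>k. norm (y k) \<le> M"
  shows "norm (zhat \<tau> h y k) \<le> (2 + 2 * real \<tau> * h) * M"
proof -
  have M0: "M \<ge> 0" using M by (meson norm_ge_zero order_trans)
  have gen: "norm ((Amap h ^^ j) (y i)) \<le> (2 + 2 * real \<tau> * h) * M" if "j \<le> 2*\<tau>" for j i
  proof -
    have "norm ((Amap h ^^ j) (y i)) \<le> (2 + real j * h) * norm (y i)" by (rule Amap_pow_norm[OF h])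
    also have "\<dots> \<le> (2 + 2 * real \<tau> * h) * M"
    proof (rule mult_mono)
      have "real j \<le> 2 * real \<tau>" using that by linarith
      thus "2 + real j * h \<le> 2 + 2 * real \<tau> * h" using h by (simp add: mult_right_mono)
    qed (use M h in auto)
    finally show ?thesis .
  qed
  show ?thesis
  proof (cases "k < \<tau>")
    case True thus ?thesis unfolding zhat_def using gen[of k 0] by simp
  next
    case False
    define q where "q = k div \<tau>"
    have q1: "q \<ge> 1" unfolding q_def using div_le_mono[of \<tau> k \<tau>] False tau by simp
    have kq: "k = q*\<tau> + k mod \<tau>" unfolding q_def by simp
    have r: "k mod \<tau> < \<tau>" using tau by simp
    from q1 obtain q' where q': "q = Suc q'" by (cases q) auto
    have "k - (q - 1) * \<tau> = \<tau> + k mod \<tau>" using kq unfolding q' by simp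
    hence "k - (q - 1) * \<tau> \<le> 2*\<tau>" using r by simp
    thus ?thesis unfolding zhat_def using False gen q_def by simp
  qed
qed

lemma BK_norm:
  fixes v :: "'a::euclidean_space \<times> 'a"
  assumes h: "h > 0" and a: "\<alpha> > 0" and b: "\<beta> > 0"
  shows "norm (Bmap h (Kmap \<alpha> \<beta> v)) \<le> (h^2/2 + h) * (\<alpha> + \<beta>) * norm v"
proof -
  let ?u = "Kmap \<alpha> \<beta> v"
  have "norm (Bmap h ?u) \<le> norm ((h^2/2) *\<^sub>R ?u) + norm (h *\<^sub>R ?u)"
    unfolding Bmap_def by (rule norm_Pair_le)
  also have "\<dots> = (h^2/2 + h) * norm ?u" using h by (simp add: algebra_simps)
  finally have 1: "norm (Bmap h ?u) \<le> (h^2/2 + h) * norm ?u" .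
  have "norm ?u \<le> \<alpha> * norm (fst v) + \<beta> * norm (snd v)"
    unfolding Kmap_def using a b norm_triangle_ineq[of "\<alpha> *\<^sub>R fst v" "\<beta> *\<^sub>R snd v"] by simp
  also have "\<dots> \<le> \<alpha> * norm v + \<beta> * norm v"
    using a b norm_fst'[of v] norm_snd'[of v] by (intro add_mono mult_left_mono) auto
  finally have 2: "norm ?u \<le> (\<alpha> + \<beta>) * norm v" by (simp add: algebra_simps)
  have "(h^2/2 + h) * norm ?u \<le> (h^2/2 + h) * ((\<alpha> + \<beta>) * norm v)"
    using 2 h by (intro mult_left_mono) auto
  with 1 show ?thesis by (simp add: mult.assoc)
qed

theorem theorem2:
  fixes N :: nat and h \<alpha> \<beta> :: real and \<tau> :: nat
    and adj :: "nat \<Rightarrow> nat \<Rightarrow> real" and lam :: "nat \<Rightarrow> real"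
    and rwp rwv :: "nat \<Rightarrow> real"
    and x w :: "nat \<Rightarrow> nat \<Rightarrow> 'a::euclidean_space \<times> 'a"
  assumes N2: "N \<ge> 2" and hpos: "h > 0" and tau_pos: "\<tau> \<ge> 1"
    and alpha_pos: "\<alpha> > 0" and beta_pos: "\<beta> > 0"
    and adj01: "\<forall>i<N. \<forall>j<N. adj i j = 0 \<or> adj i j = 1"
    and adj_sym: "\<forall>i<N. \<forall>j<N. adj i j = adj j i"
    and adj_irrefl: "\<forall>i<N. adj i i = 0"
    and eig: "char_poly (laplacian N adj) = (\<Prod>i<N. [:- lam i, 1:])"
    and eig_sorted: "\<forall>i j. i \<le> j \<and> j < N \<longrightarrow> lam i \<le> lam j"
    and conn: "graph_connected N adj"
    and phi_pos: "\<forall>i\<in>{1..<N}.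
        phi1 (lam i) \<alpha> \<beta> h (real \<tau>) > 0 \<and> phi2 (lam i) \<alpha> \<beta> h (real \<tau>) > 0
        \<and> phi3 (lam i) \<alpha> \<beta> h (real \<tau>) > 0"
    and noise: "\<forall>i<N. \<forall>k. norm (fst (w i k)) \<le> rwp i \<and> norm (snd (w i k)) \<le> rwv i"
    and dyn: "\<forall>i<N. \<forall>k. x i (Suc k) =
        Amap h (x i k) + Bmap h (ctrl N adj \<alpha> \<beta> \<tau> h x i k) + w i k"
  shows "\<forall>i<N. \<forall>j<N. \<exists>M. \<forall>k. norm (x i k - x j k) \<le> M"
proof -
  let ?L = "laplacian N adj"
  have ph3: "\<forall>i\<in>{1..<N}. phi3 (lam i) \<alpha> \<beta> h (real \<tau>) > 0" using phi_pos by blast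
  obtain P Q T where P: "P \<in> carrier_mat N N" and Q: "Q \<in> carrier_mat N N" and T: "T \<in> carrier_mat N N"
    and PQ: "P * Q = 1\<^sub>m N" and QL: "Q * ?L = T * Q" and Td: "\<forall>m<N. T $$ (m,m) = lam m"
    and Tu: "\<forall>m<N. \<forall>m'<m. T $$ (m,m') = 0" and Pc: "\<forall>i<N. \<forall>j<N. P $$ (i,0) = P $$ (j,0)"
    and lampos: "\<forall>i\<in>{1..<N}. lam i > 0"
    using spectral_setup[OF N2 adj01 adj_sym adj_irrefl eig eig_sorted conn ph3] by blast
  define z where "z m k = (\<Sum>l<N. Q $$ (m,l) *\<^sub>R x l k)" for m k
  define BK where "BK v = Bmap h (Kmap \<alpha> \<beta> v)" for v :: "'a \<times> 'a"
  have BKlin: "linear BK" unfolding BK_def by (rule BK_linear)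
  define xh where "xh j k = xhat \<tau> h x j k" for j k
  have zh: "(\<Sum>l<N. Q $$ (m,l) *\<^sub>R xh l k) = zhat \<tau> h (z m) k" for m k
    unfolding xh_def xhat_def zhat_def z_def
    by (cases "k < \<tau>") (simp_all add: Amap_sum)
  have coup: "(\<Sum>l<N. Q $$ (m,l) *\<^sub>R (\<Sum>j<N. adj l j *\<^sub>R (xh j k - xh l k)))
      = - (\<Sum>m'<N. T $$ (m,m') *\<^sub>R zhat \<tau> h (z m') k)" if m: "m < N" for m k
  proof -
    have r: "(\<Sum>j<N. adj l j *\<^sub>R (xh j k - xh l k)) = - (\<Sum>j<N. ?L $$ (l,j) *\<^sub>R xh j k)" if "l < N" for l
    proof -
      have "(\<Sum>j<N. ?L $$ (l,j) *\<^sub>R xh j k) = (\<Sum>j<N. adj l j *\<^sub>R (xh l k - xh j k))"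
        by (rule lap_row[where N=N and adj=adj and i=l and y="\<lambda>j. xh j k", OF adj_irrefl that])
      also have "\<dots> = - (\<Sum>j<N. adj l j *\<^sub>R (xh j k - xh l k))"
        by (simp add: sum_negf[symmetric] scaleR_diff_right)
      finally show ?thesis by simp
    qed
    have "(\<Sum>l<N. Q $$ (m,l) *\<^sub>R (\<Sum>j<N. adj l j *\<^sub>R (xh j k - xh l k)))
        = (\<Sum>l<N. Q $$ (m,l) *\<^sub>R (- (\<Sum>j<N. ?L $$ (l,j) *\<^sub>R xh j k)))"
      by (intro sum.cong refl) (simp only: r lessThan_iff)
    also have "\<dots> = - (\<Sum>l<N. Q $$ (m,l) *\<^sub>R (\<Sum>j<N. ?L $$ (l,j) *\<^sub>R xh j k))"
      by (simp only: scaleR_minus_right sum_negf)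
    also have "(\<Sum>l<N. Q $$ (m,l) *\<^sub>R (\<Sum>j<N. ?L $$ (l,j) *\<^sub>R xh j k))
        = (\<Sum>j<N. (\<Sum>l<N. Q $$ (m,l) * ?L $$ (l,j)) *\<^sub>R xh j k)"
      by (rule double_sum_scaleR)
    also have "\<dots> = (\<Sum>j<N. (Q * ?L) $$ (m,j) *\<^sub>R xh j k)"
      by (intro sum.cong refl) (simp add: mat_mult_entry[OF Q lap_carrier m])
    also have "\<dots> = (\<Sum>j<N. (\<Sum>m'<N. T $$ (m,m') * Q $$ (m',j)) *\<^sub>R xh j k)"
      unfolding QL by (intro sum.cong refl) (simp add: mat_mult_entry[OF T Q m])
    also have "\<dots> = (\<Sum>m'<N. T $$ (m,m') *\<^sub>R (\<Sum>j<N. Q $$ (m',j) *\<^sub>R xh j k))"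
      by (rule double_sum_scaleR[symmetric])
    also have "\<dots> = (\<Sum>m'<N. T $$ (m,m') *\<^sub>R zhat \<tau> h (z m') k)" by (simp add: zh)
    finally show ?thesis .
  qed
  define \<omega> where "\<omega> m k = (\<Sum>l<N. Q $$ (m,l) *\<^sub>R w l k)
      - (\<Sum>m'\<in>{m<..<N}. T $$ (m,m') *\<^sub>R BK (zhat \<tau> h (z m') k))" for m k
  have zdyn: "z m (Suc k) = Amap h (z m k) - lam m *\<^sub>R BK (zhat \<tau> h (z m) k) + \<omega> m k"
    if m: "m < N" for m k
  proof -
    have "z m (Suc k) = (\<Sum>l<N. Q $$ (m,l) *\<^sub>R (Amap h (x l k) + BK (\<Sum>j<N. adj l j *\<^sub>R (xh j k - xh l k)) + w l k))"
      unfolding z_def using dyn by (intro sum.cong refl) (simp add: ctrl_def BK_def xh_def)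
    also have "\<dots> = (\<Sum>l<N. Q $$ (m,l) *\<^sub>R Amap h (x l k)) + BK (\<Sum>l<N. Q $$ (m,l) *\<^sub>R (\<Sum>j<N. adj l j *\<^sub>R (xh j k - xh l k)))
        + (\<Sum>l<N. Q $$ (m,l) *\<^sub>R w l k)"
      by (simp add: scaleR_add_right sum.distrib linear_sum[OF BKlin] linear_scale[OF BKlin])
    also have "(\<Sum>l<N. Q $$ (m,l) *\<^sub>R Amap h (x l k)) = Amap h (z m k)"
      unfolding z_def by (rule Amap_sum1[symmetric])
    also have "BK (\<Sum>l<N. Q $$ (m,l) *\<^sub>R (\<Sum>j<N. adj l j *\<^sub>R (xh j k - xh l k)))
        = - (\<Sum>m'<N. T $$ (m,m') *\<^sub>R BK (zhat \<tau> h (z m') k))"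
      unfolding coup[OF m] by (simp add: linear_neg[OF BKlin] linear_sum[OF BKlin] linear_scale[OF BKlin])
    also have "(\<Sum>m'<N. T $$ (m,m') *\<^sub>R BK (zhat \<tau> h (z m') k))
        = T $$ (m,m) *\<^sub>R BK (zhat \<tau> h (z m) k) + (\<Sum>m'\<in>{m<..<N}. T $$ (m,m') *\<^sub>R BK (zhat \<tau> h (z m') k))"
      by (rule tri_split[OF m]) (use Tu m in auto)
    finally show ?thesis unfolding \<omega>_def using Td m by (simp add: algebra_simps)
  qed
  define Wq where "Wq m = (\<Sum>l<N. \<bar>Q $$ (m,l)\<bar> * (rwp l + rwv l))" for m
  have wq: "norm (\<Sum>l<N. Q $$ (m,l) *\<^sub>R w l k) \<le> Wq m" for m k
  proof -
    have "norm (\<Sum>l<N. Q $$ (m,l) *\<^sub>R w l k) \<le> (\<Sum>l<N. norm (Q $$ (m,l) *\<^sub>R w l k))"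
      by (rule norm_sum)
    also have "\<dots> \<le> Wq m" unfolding Wq_def
    proof (rule sum_mono)
      fix l assume l: "l \<in> {..<N}"
      have "norm (w l k) \<le> norm (fst (w l k)) + norm (snd (w l k))" by (metis norm_Pair_le prod.collapse)
      also have "\<dots> \<le> rwp l + rwv l" using noise l by (simp add: add_mono)
      finally show "norm (Q $$ (m,l) *\<^sub>R w l k) \<le> \<bar>Q $$ (m,l)\<bar> * (rwp l + rwv l)"
        by (simp add: mult_left_mono)
    qed
    finally show ?thesis .
  qed
  define CB where "CB = (h^2/2 + h) * (\<alpha> + \<beta>) * (2 + 2 * real \<tau> * h)"
  have modeb: "\<exists>M. \<forall>k. norm (z m k) \<le> M" if "1 \<le> m" "m < N" for m
    using that
  proof (induction "N - m" arbitrary: m rule: less_induct)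
    case less
    have IH: "\<exists>M. \<forall>k. norm (z m' k) \<le> M" if m': "m' \<in> {m<..<N}" for m'
    proof -
      have lt: "N - m' < N - m" using m' less.prems by auto
      have "1 \<le> m'" "m' < N" using m' less.prems by auto
      thus ?thesis using less.hyps[OF lt] by blast
    qed
    then obtain Mf where Mf: "\<forall>m'\<in>{m<..<N}. \<forall>k. norm (z m' k) \<le> Mf m'"
      using bchoice[of "{m<..<N}" "\<lambda>m' M. \<forall>k. norm (z m' k) \<le> M"] by blast
    define W where "W = Wq m + (\<Sum>m'\<in>{m<..<N}. \<bar>T $$ (m,m')\<bar> * (CB * Mf m'))"
    have wb: "\<forall>k. norm (\<omega> m k) \<le> W"
    proof
      fix k
      have "norm (\<Sum>m'\<in>{m<..<N}. T $$ (m,m') *\<^sub>R BK (zhat \<tau> h (z m') k))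
          \<le> (\<Sum>m'\<in>{m<..<N}. norm (T $$ (m,m') *\<^sub>R BK (zhat \<tau> h (z m') k)))" by (rule norm_sum)
      also have "\<dots> \<le> (\<Sum>m'\<in>{m<..<N}. \<bar>T $$ (m,m')\<bar> * (CB * Mf m'))"
      proof (rule sum_mono)
        fix m' assume m': "m' \<in> {m<..<N}"
        have "norm (BK (zhat \<tau> h (z m') k)) \<le> (h^2/2 + h) * (\<alpha> + \<beta>) * norm (zhat \<tau> h (z m') k)"
          unfolding BK_def by (rule BK_norm[OF hpos alpha_pos beta_pos])
        also have "\<dots> \<le> (h^2/2 + h) * (\<alpha> + \<beta>) * ((2 + 2 * real \<tau> * h) * Mf m')"
          using zhat_bound[OF hpos tau_pos, of "z m'" "Mf m'" k] Mf m' hpos alpha_pos beta_pos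
          by (intro mult_left_mono) auto
        finally have "norm (BK (zhat \<tau> h (z m') k)) \<le> CB * Mf m'" unfolding CB_def by (simp add: mult.assoc)
        thus "norm (T $$ (m,m') *\<^sub>R BK (zhat \<tau> h (z m') k)) \<le> \<bar>T $$ (m,m')\<bar> * (CB * Mf m')"
          by (simp add: mult_left_mono)
      qed
      finally have 2: "norm (\<Sum>m'\<in>{m<..<N}. T $$ (m,m') *\<^sub>R BK (zhat \<tau> h (z m') k))
          \<le> (\<Sum>m'\<in>{m<..<N}. \<bar>T $$ (m,m')\<bar> * (CB * Mf m'))" .
      have "norm (\<omega> m k) \<le> norm (\<Sum>l<N. Q $$ (m,l) *\<^sub>R w l k)
          + norm (\<Sum>m'\<in>{m<..<N}. T $$ (m,m') *\<^sub>R BK (zhat \<tau> h (z m') k))"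
        unfolding \<omega>_def by (rule norm_triangle_ineq4)
      thus "norm (\<omega> m k) \<le> W" unfolding W_def using wq[of m k] 2 by linarith
    qed
    have mm: "m \<in> {1..<N}" using less.prems by auto
    have pp: "phi1 (lam m) \<alpha> \<beta> h (real \<tau>) > 0" "phi2 (lam m) \<alpha> \<beta> h (real \<tau>) > 0"
      "phi3 (lam m) \<alpha> \<beta> h (real \<tau>) > 0" using phi_pos mm by auto
    have lm: "lam m > 0" using lampos mm by auto
    have dz: "\<forall>k. z m (Suc k) = Amap h (z m k) - lam m *\<^sub>R Bmap h (Kmap \<alpha> \<beta> (zhat \<tau> h (z m) k)) + \<omega> m k"
      using zdyn[OF less.prems(2)] unfolding BK_def by blast
    show ?case by (rule mode_vec_bounded[OF hpos tau_pos alpha_pos beta_pos lm pp dz wb])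
  qed
  then obtain Mz where Mz: "\<forall>m\<in>{1..<N}. \<forall>k. norm (z m k) \<le> Mz m"
    using bchoice[of "{1..<N}" "\<lambda>m M. \<forall>k. norm (z m k) \<le> M"] by force
  have recon: "x i k = (\<Sum>m<N. P $$ (i,m) *\<^sub>R z m k)" if i: "i < N" for i k
  proof -
    have "(\<Sum>m<N. P $$ (i,m) *\<^sub>R z m k) = (\<Sum>l<N. (\<Sum>m<N. P $$ (i,m) * Q $$ (m,l)) *\<^sub>R x l k)"
      unfolding z_def by (rule double_sum_scaleR)
    also have "\<dots> = (\<Sum>l<N. (if i = l then 1 else 0) *\<^sub>R x l k)"
    proof (intro sum.cong refl)
      fix l assume l: "l \<in> {..<N}"
      have "(\<Sum>m<N. P $$ (i,m) * Q $$ (m,l)) = (P * Q) $$ (i,l)"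
        using mat_mult_entry[OF P Q i] l by simp
      thus "(\<Sum>m<N. P $$ (i,m) * Q $$ (m,l)) *\<^sub>R x l k = (if i = l then 1 else 0) *\<^sub>R x l k"
        unfolding PQ using i l by simp
    qed
    also have "\<dots> = x i k" using i by (simp add: if_distrib[of "\<lambda>c. c *\<^sub>R _"] cong: if_cong)
    finally show ?thesis by simp
  qed
  show ?thesis
  proof (intro allI impI)
    fix i j assume i: "i < N" and j: "j < N"
    define d where "d m = P $$ (i,m) - P $$ (j,m)" for m
    have d0: "d 0 = 0" unfolding d_def using Pc[rule_format, OF i j] by simp
    have "norm (x i k - x j k) \<le> (\<Sum>m<N. \<bar>d m\<bar> * Mz m)" for k
    proof -
      have eq: "x i k - x j k = (\<Sum>m<N. d m *\<^sub>R z m k)"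
        unfolding recon[OF i] recon[OF j] d_def by (simp add: sum_subtractf scaleR_diff_left)
      have "norm (x i k - x j k) \<le> (\<Sum>m<N. norm (d m *\<^sub>R z m k))" unfolding eq by (rule norm_sum)
      also have "\<dots> \<le> (\<Sum>m<N. \<bar>d m\<bar> * Mz m)"
      proof (rule sum_mono)
        fix m assume m: "m \<in> {..<N}"
        show "norm (d m *\<^sub>R z m k) \<le> \<bar>d m\<bar> * Mz m"
        proof (cases "m = 0")
          case True thus ?thesis using d0 by simp
        next
          case False
          hence "m \<in> {1..<N}" using m by auto
          hence "norm (z m k) \<le> Mz m" using Mz by blast
          thus ?thesis by (simp add: mult_left_mono)
        qed
      qed
      finally show ?thesis .
    qed
    thus "\<exists>M. \<forall>k. norm (x i k - x j k) \<le> M" by blast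
  qed
qed

end
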